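(* Consider the setting described in the context (decentralized affine nonlinear system, loop $j$, controller $K_{i,j}$ with $A_{jj}-B_{jj}K_{i,j}$ Hurwitz, sample times $t_0<\dots<t_l$, data trajectories, and a block-diagonal state transformation $S=\mathrm{diag}(S_1,\dots,S_N)$ with $S_j\in\mathrm{GL}(n_j)$). Let $\mathbf{A}_{i,j},\mathbf{b}_{i,j}$ be the dEIRL regression matrix and vector and $\tilde{\mathbf{A}}_{i,j},\tilde{\mathbf{b}}_{i,j}$ the MEE (modulated) regression matrix and vector. Then $P_{i,j}\in\mathbb{S}^{n_j}$, $P_{i,j}>0$, satisfies the dEIRL regression $\mathbf{A}_{i,j}\operatorname{svec}(P_{i,j})=\mathbf{b}_{i,j}$ if and only if $\tilde P_{i,j}=S_j^{-T}P_{i,j}S_j^{-1}$ satisfies the MEE regression $\tilde{\mathbf{A}}_{i,j}\operatorname{svec}(\tilde P_{i,j})=\tilde{\mathbf{b}}_{i,j}$. Furthermore, $$\tilde{\mathbf{A}}_{i,j}=\mathbf{A}_{i,j}(S_j\,\underline{\otimes}\, S_j)^T,\qquad \tilde{\mathbf{b}}_{i,j}=\mathbf{b}_{i,j}.$$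
   Context: Symmetric Kronecker algebra: for $k\in\mathbb{N}$ let $\underline{k}=k(k+1)/2$, $\mathbb{S}^k$ the real symmetric $k\times k$ matrices, $\operatorname{vec}$ column-stacking, $\otimes$ the Kronecker product, $e_1,\dots,e_k$ the standard basis. Enumerate pairs $(r,c)$, $1\le r\le c\le k$, in the order $(1,1),\dots,(1,k),(2,2),\dots,(2,k),\dots,(k,k)$ as $(r(\ell),c(\ell))$; set $E_\ell=e_{r(\ell)}e_{r(\ell)}^T$ if $r(\ell)=c(\ell)$, $E_\ell=\frac{\sqrt2}{2}(e_{r(\ell)}e_{c(\ell)}^T+e_{c(\ell)}e_{r(\ell)}^T)$ otherwise; $W_k\in\mathbb{R}^{\underline{k}\times k^2}$ has $\ell$-th row $\operatorname{vec}(E_\ell)^T$. For $A,B\in\mathbb{R}^{p\times q}$, $A\,\underline{\otimes}\, B = W_p(A\otimes B)W_q^T$ (for row vectors $a^T,b^T$, $a,b\in\mathbb{R}^q$: $a^T\,\underline{\otimes}\, b^T=(a\otimes b)^TW_q^T$). $\operatorname{svec}(P)=W_k\operatorname{vec}(P)$ for $P\in\mathbb{S}^k$. For $t_0<\dots<t_l$ and $x,y:[t_0,t_l]\to\mathbb{R}^k$: $\delta_{x,y}\in\mathbb{R}^{l\times\underline{k}}$ has $k'$-th row $(x(t_{k'})+y(t_{k'-1}))^T\,\underline{\otimes}\,(x(t_{k'})-y(t_{k'-1}))^T$, and for square-integrable $x,y$, $I_{x,y}\in\mathbb{R}^{l\times\underline{k}}$ has $k'$-th row $\int_{t_{k'-1}}^{t_{k'}}x^T\,\underline{\otimes}\,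 y^T\,d\tau$. System: $\dot x=f(x)+g(x)u$, $x\in\mathbb{R}^n$, $u\in\mathbb{R}^m$, with $f(0)=0$, $f,g$ Lipschitz on a compact set containing the origin in its interior, and state partitioned into $N$ loops $x=(x_1,\dots,x_N)$, $x_j\in\mathbb{R}^{n_j}$, $u=(u_1,\dots,u_N)$, $u_j\in\mathbb{R}^{m_j}$, so that $\dot x_j=f_j(x)+g_j(x)u$ with $g_j(x)\in\mathbb{R}^{n_j\times m}$. $(A,B)$ is the linearization at $0$, with diagonal blocks $A_{jj}\in\mathbb{R}^{n_j\times n_j}$, $B_{jj}\in\mathbb{R}^{n_j\times m_j}$. Cost matrices $Q_j\in\mathbb{S}^{n_j}$, $Q_j\ge0$, $R_j\in\mathbb{S}^{m_j}$, $R_j>0$. Fix loop $j$ and $K_{i,j}\in\mathbb{R}^{m_j\times n_j}$ with $A_{jj}-B_{jj}K_{i,j}$ Hurwitz, and put $Q_{i,j}=Q_j+K_{i,j}^TR_jK_{i,j}$. Let $x(\cdot),u(\cdot)$ be a (square-integrable) state-input trajectory on $[t_0,t_l]$ and $w_j=f_j(x)-A_{jj}x_j$. The dEIRL regression is $\mathbf{A}_{i,j}=\delta_{x_j,x_j}-2\big[I_{x_j,x_j}(I_{n_j}\,\underline{\otimes}\, B_{jj}K_{i,j})^T+I_{x_j,g_j(x)u}+I_{x_j,w_j}\big]\in\mathbb{R}^{l\times\underline{n}_j}$, $\mathbf{b}_{i,j}=-I_{x_j,x_j}\operatorname{svec}(Q_{i,j})$. Modulation: $S=\mathrm{diag}(S_1,\dots,S_N)$,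 $S_j\in\mathrm{GL}(n_j)$, $\tilde x=Sx$, $\tilde x_j=S_jx_j$; $\tilde f_j=S_j\circ f_j\circ S^{-1}$, $\tilde g_j=S_j\circ g_j\circ S^{-1}$, $\tilde A_{jj}=S_jA_{jj}S_j^{-1}$, $\tilde B_{jj}=S_jB_{jj}$, $\tilde Q_j=S_j^{-T}Q_jS_j^{-1}$, $\tilde K_{i,j}=K_{i,j}S_j^{-1}$, $\tilde Q_{i,j}=\tilde Q_j+\tilde K_{i,j}^TR_j\tilde K_{i,j}$, $\tilde w_j=\tilde f_j(\tilde x)-\tilde A_{jj}\tilde x_j$. The MEE regression $(\tilde{\mathbf{A}}_{i,j},\tilde{\mathbf{b}}_{i,j})$ is defined by the same formulas as $(\mathbf{A}_{i,j},\mathbf{b}_{i,j})$ with every quantity replaced by its tilded counterpart (data $\tilde x_j$, $\tilde g_j(\tilde x)u$, $\tilde w_j$, $\tilde B_{jj}\tilde K_{i,j}$, $\tilde Q_{i,j}$). *)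

theory Defs
  imports "HOL-Analysis.Analysis" "Jordan_Normal_Form.Matrix" "Jordan_Normal_Form.Char_Poly"
begin

(* All indices are 0-based.  Vectors are JNF 'real vec', matrices JNF 'real mat'. *)

definition tri :: "nat \<Rightarrow> nat" where
  "tri k = k * (k + 1) div 2"

definition svec_pairs :: "nat \<Rightarrow> (nat \<times> nat) list" where
  "svec_pairs k = concat (map (\<lambda>r. map (\<lambda>c. (r, c)) [r..<k]) [0..<k])"

definition Ebas :: "nat \<Rightarrow> nat \<Rightarrow> real mat" where
  "Ebas k l = (let (r, c) = svec_pairs k ! l in
     mat k k (\<lambda>(a, b). if r = c then (if a = r \<and> b = r then 1 else 0)
                        else if (a = r \<and> b = c) \<or> (a = c \<and> b = r) then sqrt 2 / 2 else 0))"

definition vecm :: "real mat \<Rightarrow> real vec" where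
  "vecm A = vec (dim_row A * dim_col A) (\<lambda>i. A $$ (i mod dim_row A, i div dim_row A))"

definition Wmat :: "nat \<Rightarrow> real mat" where
  "Wmat k = mat (tri k) (k * k) (\<lambda>(l, i). vecm (Ebas k l) $ i)"

definition kron :: "real mat \<Rightarrow> real mat \<Rightarrow> real mat" where
  "kron A B = mat (dim_row A * dim_row B) (dim_col A * dim_col B)
     (\<lambda>(i, j). A $$ (i div dim_row B, j div dim_col B) * B $$ (i mod dim_row B, j mod dim_col B))"

definition kron_vec :: "real vec \<Rightarrow> real vec \<Rightarrow> real vec" where
  "kron_vec a b = vec (dim_vec a * dim_vec b) (\<lambda>i. a $ (i div dim_vec b) * b $ (i mod dim_vec b))"

definition skron :: "real mat \<Rightarrow> real mat \<Rightarrow> real mat" where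
  "skron A B = Wmat (dim_row A) * kron A B * transpose_mat (Wmat (dim_col A))"

(* a^T skron b^T = (a \<otimes> b)^T W_q^T, represented as the (column) vector W_q (a \<otimes> b) *)
definition skron_row :: "real vec \<Rightarrow> real vec \<Rightarrow> real vec" where
  "skron_row a b = Wmat (dim_vec a) *\<^sub>v kron_vec a b"

definition svec :: "real mat \<Rightarrow> real vec" where
  "svec P = Wmat (dim_row P) *\<^sub>v vecm P"

(* delta_{x,y} \<in> R^{l \<times> tri k}; row r (0-based) corresponds to k' = r+1 *)
definition delta_mat :: "nat \<Rightarrow> (nat \<Rightarrow> real) \<Rightarrow> nat \<Rightarrow> (real \<Rightarrow> real vec) \<Rightarrow> (real \<Rightarrow> real vec) \<Rightarrow> real mat" where
  "delta_mat k t l x y = mat l (tri k)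
     (\<lambda>(r, c). skron_row (x (t (Suc r)) + y (t r)) (x (t (Suc r)) - y (t r)) $ c)"

definition Int_mat :: "nat \<Rightarrow> (nat \<Rightarrow> real) \<Rightarrow> nat \<Rightarrow> (real \<Rightarrow> real vec) \<Rightarrow> (real \<Rightarrow> real vec) \<Rightarrow> real mat" where
  "Int_mat k t l x y = mat l (tri k)
     (\<lambda>(r, c). integral {t r .. t (Suc r)} (\<lambda>\<tau>. skron_row (x \<tau>) (y \<tau>) $ c))"

definition sq_integrable_on :: "nat \<Rightarrow> (real \<Rightarrow> real vec) \<Rightarrow> real \<Rightarrow> real \<Rightarrow> bool" where
  "sq_integrable_on d x a b \<longleftrightarrow>
     (\<forall>i<d. (\<lambda>\<tau>. x \<tau> $ i) measurable_on {a..b} \<and> (\<lambda>\<tau>. (x \<tau> $ i)^2) integrable_on {a..b})"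

definition vnorm :: "real vec \<Rightarrow> real" where
  "vnorm v = sqrt (v \<bullet> v)"

definition hurwitz :: "real mat \<Rightarrow> bool" where
  "hurwitz M \<longleftrightarrow> (\<forall>z. eigenvalue (map_mat complex_of_real M) z \<longrightarrow> Re z < 0)"

definition sym_mat :: "nat \<Rightarrow> real mat \<Rightarrow> bool" where
  "sym_mat k P \<longleftrightarrow> P \<in> carrier_mat k k \<and> transpose_mat P = P"

definition psd_mat :: "nat \<Rightarrow> real mat \<Rightarrow> bool" where
  "psd_mat k P \<longleftrightarrow> sym_mat k P \<and> (\<forall>v. dim_vec v = k \<longrightarrow> v \<bullet> (P *\<^sub>v v) \<ge> 0)"

definition pd_mat :: "nat \<Rightarrow> real mat \<Rightarrow> bool" where
  "pd_mat k P \<longleftrightarrow> sym_mat k P \<and> (\<forall>v. dim_vec v = k \<longrightarrow> v \<noteq> 0\<^sub>v k \<longrightarrow> v \<bullet> (P *\<^sub>v v) > 0)"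

definition minv :: "real mat \<Rightarrow> real mat" where
  "minv A = (SOME B. inverts_mat A B \<and> inverts_mat B A)"

(* loop partition: dims ds 0, ..., ds (N-1); offset of block j *)
definition offs :: "(nat \<Rightarrow> nat) \<Rightarrow> nat \<Rightarrow> nat" where
  "offs ds j = (\<Sum>i<j. ds i)"

definition blk_vec :: "(nat \<Rightarrow> nat) \<Rightarrow> nat \<Rightarrow> real vec \<Rightarrow> real vec" where
  "blk_vec ds j v = vec (ds j) (\<lambda>i. v $ (offs ds j + i))"

definition blk_rows :: "(nat \<Rightarrow> nat) \<Rightarrow> nat \<Rightarrow> real mat \<Rightarrow> real mat" where
  "blk_rows ds j M = mat (ds j) (dim_col M) (\<lambda>(a, b). M $$ (offs ds j + a, b))"

definition blk_diag_entry :: "(nat \<Rightarrow> nat) \<Rightarrow> (nat \<Rightarrow> nat) \<Rightarrow> nat \<Rightarrow> real mat \<Rightarrow> real mat" where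
  "blk_diag_entry rs cs j M = mat (rs j) (cs j) (\<lambda>(a, b). M $$ (offs rs j + a, offs cs j + b))"

definition block_diag :: "nat \<Rightarrow> (nat \<Rightarrow> nat) \<Rightarrow> (nat \<Rightarrow> real mat) \<Rightarrow> real mat" where
  "block_diag N ds Ss = (let n = offs ds N in
     mat n n (\<lambda>(a, b). if (\<exists>j<N. offs ds j \<le> a \<and> a < offs ds (Suc j) \<and> offs ds j \<le> b \<and> b < offs ds (Suc j))
        then (let j = (THE j. j < N \<and> offs ds j \<le> a \<and> a < offs ds (Suc j)) in Ss j $$ (a - offs ds j, b - offs ds j))
        else 0))"

(* the dEIRL regression (A_{i,j}, b_{i,j}) for a loop with data
   xj (loop state), gu (= g_j(x)u), wj, BK (= B_jj K_{i,j}), Qi (= Q_{i,j}) *)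
definition reg_A :: "nat \<Rightarrow> (nat \<Rightarrow> real) \<Rightarrow> nat \<Rightarrow> (real \<Rightarrow> real vec) \<Rightarrow> (real \<Rightarrow> real vec)
     \<Rightarrow> (real \<Rightarrow> real vec) \<Rightarrow> real mat \<Rightarrow> real mat" where
  "reg_A k t l xj gu wj BK = delta_mat k t l xj xj -
     2 \<cdot>\<^sub>m (Int_mat k t l xj xj * transpose_mat (skron (1\<^sub>m k) BK) + Int_mat k t l xj gu + Int_mat k t l xj wj)"

definition reg_b :: "nat \<Rightarrow> (nat \<Rightarrow> real) \<Rightarrow> nat \<Rightarrow> (real \<Rightarrow> real vec) \<Rightarrow> real mat \<Rightarrow> real vec" where
  "reg_b k t l xj Qi = - (Int_mat k t l xj xj *\<^sub>v svec Qi)"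

end

theory Submission
  imports Defs
begin

lemma sum_tri: "(\<Sum>r<k. k - r) = tri k"
proof (induction k)
  case 0 then show ?case by (simp add: tri_def)
next
  case (Suc k)
  have "(\<Sum>r<Suc k. Suc k - r) = (\<Sum>r<k. Suc k - r) + 1" by simp
  also have "(\<Sum>r<k. Suc k - r) = (\<Sum>r<k. (k - r) + 1)" by (rule sum.cong) auto
  also have "\<dots> = (\<Sum>r<k. k - r) + (\<Sum>r<k. 1)" by (rule sum.distrib)
  also have "\<dots> = tri k + k" using Suc by simp
  finally show ?case by (simp add: tri_def)
qed

lemma svec_pairs_length: "length (svec_pairs k) = tri k"
  by (simp add: svec_pairs_def length_concat o_def sum_list_sum_nth sum_tri[symmetric] atLeast0LessThan)

lemma svec_pairs_set: "set (svec_pairs k) = {(r,c). r \<le> c \<and> c < k}"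
  apply (auto simp: svec_pairs_def)
  subgoal for a b by (rule bexI[of _ a]) auto
  done

lemma svec_pairs_distinct: "distinct (svec_pairs k)"
  unfolding svec_pairs_def
proof (rule distinct_concat)
  show "distinct (map (\<lambda>r. map (Pair r) [r..<k]) [0..<k])"
  proof (subst distinct_map, intro conjI inj_onI)
    fix x y assume x: "x \<in> set [0..<k]" and y: "y \<in> set [0..<k]" and e: "map (Pair x) [x..<k] = map (Pair y) [y..<k]"
    have "(x,x) \<in> set (map (Pair x) [x..<k])" using x by auto
    then have "(x,x) \<in> set (map (Pair y) [y..<k])" using e by simp
    then show "x = y" by auto
  qed simp
qed (auto simp: distinct_map inj_on_def)

definition Ecoef :: "nat \<times> nat \<Rightarrow> nat \<Rightarrow> nat \<Rightarrow> real" where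
  "Ecoef p a b = (if (a = fst p \<and> b = snd p) \<or> (a = snd p \<and> b = fst p) then (if fst p = snd p then 1 else sqrt 2 / 2) else 0)"

lemma Ebas_entry: "l < tri k \<Longrightarrow> a < k \<Longrightarrow> b < k \<Longrightarrow> Ebas k l $$ (a,b) = Ecoef (svec_pairs k ! l) a b"
  by (auto simp: Ebas_def Ecoef_def split: prod.splits)

lemma Wmat_carrier: "Wmat k \<in> carrier_mat (tri k) (k*k)"
  by (simp add: Wmat_def)

lemma Ebas_dims: "dim_row (Ebas k l) = k" "dim_col (Ebas k l) = k"
  by (auto simp: Ebas_def split: prod.splits)

lemma Wmat_entry: "l < tri k \<Longrightarrow> i < k*k \<Longrightarrow> Wmat k $$ (l,i) = Ecoef (svec_pairs k ! l) (i mod k) (i div k)"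
proof -
  assume l: "l < tri k" and i: "i < k*k"
  have k: "0 < k" using i by (cases k) auto
  have "i div k < k" using i by (simp add: less_mult_imp_div_less)
  then show ?thesis using l i k
    by (simp add: Wmat_def vecm_def Ebas_dims Ebas_entry)
qed

lemma sum_pairs: "(\<Sum>l<tri k. F (svec_pairs k ! l)) = (\<Sum>p\<in>{(r,c). r \<le> c \<and> c < k}. F p)"
proof -
  have "(\<Sum>l<tri k. F (svec_pairs k ! l)) = sum_list (map F (svec_pairs k))"
    by (simp add: sum_list_sum_nth svec_pairs_length atLeast0LessThan)
  also have "\<dots> = sum F (set (svec_pairs k))"
    by (rule sum_list_distinct_conv_sum_set[OF svec_pairs_distinct])
  finally show ?thesis by (simp add: svec_pairs_set)
qed

lemma Ecoef_sum: assumes "a < k" "b < k" "a' < k" "b' < k"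
  shows "(\<Sum>p\<in>{(r,c). r \<le> c \<and> c < k}. Ecoef p a b * Ecoef p a' b')
     = (if a = a' \<and> b = b' then 1/2 else 0) + (if a = b' \<and> b = a' then 1/2 else 0)"
proof -
  let ?P = "{(r,c). r \<le> c \<and> c < k}"
  let ?p0 = "(min a b, max a b)"
  have fin: "finite ?P" by (rule finite_subset[of _ "{..<k} \<times> {..<k}"]) auto
  have p0: "?p0 \<in> ?P" using assms by auto
  have z: "\<forall>p\<in>?P - {?p0}. Ecoef p a b * Ecoef p a' b' = 0"
    by (auto simp: Ecoef_def)
  have "(\<Sum>p\<in>?P. Ecoef p a b * Ecoef p a' b') = Ecoef ?p0 a b * Ecoef ?p0 a' b'"
    using sum.remove[OF fin p0, of "\<lambda>p. Ecoef p a b * Ecoef p a' b'"] sum.neutral[OF z] by simp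
  also have "\<dots> = (if a = a' \<and> b = b' then 1/2 else 0) + (if a = b' \<and> b = a' then 1/2 else 0)"
  proof -
    have s2: "sqrt 2 / 2 * (sqrt 2 / 2) = (1/2::real)" by (simp add: divide_simps)
    have e1: "Ecoef ?p0 a b = (if a = b then 1 else sqrt 2/2)" by (simp add: Ecoef_def min_def max_def)
    have e2: "Ecoef ?p0 a' b' = (if (a'=a \<and> b'=b) \<or> (a'=b \<and> b'=a) then (if a=b then 1 else sqrt 2/2) else 0)"
      unfolding Ecoef_def min_def max_def by (cases "a \<le> b") auto
    have key: "(if a = b then 1 else sqrt 2/2) * (if (a'=a \<and> b'=b) \<or> (a'=b \<and> b'=a) then (if a=b then 1 else sqrt 2/2) else 0)
   = (if a = a' \<and> b = b' then 1/2 else 0) + (if a = b' \<and> b = a' then (1/2::real) else 0)"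
    proof (cases "a = b")
      case True then show ?thesis by auto
    next
      case False
      then show ?thesis
      proof (cases "a'=a \<and> b'=b")
        case True then show ?thesis using False s2 by auto
      next
        case F2: False
        then show ?thesis using False s2 by auto
      qed
    qed
    show ?thesis unfolding e1 e2 by (rule key)
  qed
  finally show ?thesis .
qed

lemma mult_entry: "A \<in> carrier_mat n m \<Longrightarrow> B \<in> carrier_mat m p \<Longrightarrow> i < n \<Longrightarrow> j < p \<Longrightarrow>
  (A * B) $$ (i,j) = (\<Sum>k<m. A $$ (i,k) * B $$ (k,j))"
  by (simp add: scalar_prod_def atLeast0LessThan)

lemma multv_entry: "A \<in> carrier_mat n m \<Longrightarrow> dim_vec v = m \<Longrightarrow> i < n \<Longrightarrow>
  (A *\<^sub>v v) $ i = (\<Sum>k<m. A $$ (i,k) * v $ k)"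
  by (simp add: scalar_prod_def atLeast0LessThan)

lemma sum_split: "(\<Sum>m<(q::nat) * t. f m) = (\<Sum>a<q. \<Sum>b<t. f (a * t + b))"
proof -
  have "(\<Sum>a<q. sum f {a * t..<a * t + t}) = sum f {..<q * t}" using sum.nat_group[where g=f and k=t and n=q] .
  moreover have "sum f {a * t..<a * t + t} = (\<Sum>b<t. f(a * t + b))" for a
  proof -
    have e: "sum f {0 + a * t..<t + a * t} = sum (\<lambda>i. f (i + a * t)) {0..<t}" by (rule sum.shift_bounds_nat_ivl)
    then show ?thesis by (simp add: atLeast0LessThan add.commute)
  qed
  ultimately show ?thesis by simp
qed

lemma divmod_bounds: "i < p * (s::nat) \<Longrightarrow> i div s < p \<and> i mod s < s"
proof -
  assume h: "i < p * s"
  then have "s > 0" by (cases s) auto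
  then show ?thesis using h by (simp add: less_mult_imp_div_less)
qed

lemma kron_carrier: "kron A B \<in> carrier_mat (dim_row A * dim_row B) (dim_col A * dim_col B)"
  by (simp add: kron_def)

lemma kron_dims [simp]: "dim_row (kron A B) = dim_row A * dim_row B" "dim_col (kron A B) = dim_col A * dim_col B"
  by (simp_all add: kron_def)

lemma kron_entry: "i < dim_row A * dim_row B \<Longrightarrow> j < dim_col A * dim_col B \<Longrightarrow>
  kron A B $$ (i,j) = A $$ (i div dim_row B, j div dim_col B) * B $$ (i mod dim_row B, j mod dim_col B)"
  by (simp add: kron_def)

lemma kron_mult: assumes A: "A \<in> carrier_mat p q" and C: "C \<in> carrier_mat q r"
  and B: "B \<in> carrier_mat s t" and D: "D \<in> carrier_mat t u"
  shows "kron A B * kron C D = kron (A*C) (B*D)"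
proof (rule eq_matI)
  show "dim_row (kron A B * kron C D) = dim_row (kron (A * C) (B * D))" using A B C D by simp
  show "dim_col (kron A B * kron C D) = dim_col (kron (A * C) (B * D))" using A B C D by simp
  fix i j assume i: "i < dim_row (kron (A * C) (B * D))" and j: "j < dim_col (kron (A * C) (B * D))"
  then have i': "i < p * s" and j': "j < r * u" using A B C D by auto
  have ib: "i div s < p" "i mod s < s" using divmod_bounds[OF i'] by auto
  have jb: "j div u < r" "j mod u < u" using divmod_bounds[OF j'] by auto
  have "(kron A B * kron C D) $$ (i,j) = (\<Sum>m<q * t. kron A B $$ (i,m) * kron C D $$ (m,j))"
  proof -
    have kAB: "kron A B \<in> carrier_mat (p * s) (q * t)" and kCD: "kron C D \<in> carrier_mat (q * t) (r * u)"
      using A B C D by auto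
    show ?thesis by (rule mult_entry[OF kAB kCD i' j'])
  qed
  also have "\<dots> = (\<Sum>a<q. \<Sum>b<t. kron A B $$ (i,a * t+b) * kron C D $$ (a * t+b,j))" by (rule sum_split)
  also have "\<dots> = (\<Sum>a<q. \<Sum>b<t. (A $$ (i div s, a) * C $$ (a, j div u)) * (B $$ (i mod s, b) * D $$ (b, j mod u)))"
  proof (intro sum.cong refl)
    fix a b assume a: "a \<in> {..<q}" and b: "b \<in> {..<t}"
    have "a * t+b < a * t+t" using b by simp
    also have "\<dots> = Suc a * t" by simp
    also have "\<dots> \<le> q * t" using a by (intro mult_le_mono1) auto
    finally have m: "a * t+b < q * t" .
    have dm: "(a * t+b) div t = a" "(a * t+b) mod t = b" using b by auto
    show "kron A B $$ (i,a * t+b) * kron C D $$ (a * t+b,j) =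
      (A $$ (i div s, a) * C $$ (a, j div u)) * (B $$ (i mod s, b) * D $$ (b, j mod u))"
      using A B C D i' j' m b by (simp add: kron_entry dm)
  qed
  also have "\<dots> = (\<Sum>a<q. A $$ (i div s, a) * C $$ (a, j div u)) * (\<Sum>b<t. B $$ (i mod s, b) * D $$ (b, j mod u))"
    by (simp add: sum_product)
  also have "\<dots> = (A*C) $$ (i div s, j div u) * (B*D) $$ (i mod s, j mod u)"
    using mult_entry[OF A C ib(1) jb(1)] mult_entry[OF B D ib(2) jb(2)] by simp
  also have "\<dots> = kron (A*C) (B*D) $$ (i,j)"
    using A B C D i' j' by (simp add: kron_entry)
  finally show "(kron A B * kron C D) $$ (i,j) = kron (A*C) (B*D) $$ (i,j)" .
qed


lemma kron_vec_dim [simp]: "dim_vec (kron_vec a b) = dim_vec a * dim_vec b"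
  by (simp add: kron_vec_def)

lemma kron_multv: assumes A: "A \<in> carrier_mat p q" and B: "B \<in> carrier_mat s t"
  and a: "dim_vec a = q" and b: "dim_vec b = t"
  shows "kron A B *\<^sub>v kron_vec a b = kron_vec (A *\<^sub>v a) (B *\<^sub>v b)"
proof (rule eq_vecI)
  show "dim_vec (kron A B *\<^sub>v kron_vec a b) = dim_vec (kron_vec (A *\<^sub>v a) (B *\<^sub>v b))" using A B by simp
  fix i assume "i < dim_vec (kron_vec (A *\<^sub>v a) (B *\<^sub>v b))"
  then have i': "i < p * s" using A B by simp
  have ib: "i div s < p" "i mod s < s" using divmod_bounds[OF i'] by auto
  have kAB: "kron A B \<in> carrier_mat (p * s) (q * t)" using A B by auto
  have "(kron A B *\<^sub>v kron_vec a b) $ i = (\<Sum>m<q * t. kron A B $$ (i,m) * kron_vec a b $ m)"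
    by (rule multv_entry[OF kAB _ i']) (use a b in simp)
  also have "\<dots> = (\<Sum>x<q. \<Sum>y<t. kron A B $$ (i,x * t+y) * kron_vec a b $ (x * t+y))" by (rule sum_split)
  also have "\<dots> = (\<Sum>x<q. \<Sum>y<t. (A $$ (i div s, x) * a $ x) * (B $$ (i mod s, y) * b $ y))"
  proof (intro sum.cong refl)
    fix x y assume x: "x \<in> {..<q}" and y: "y \<in> {..<t}"
    have "x * t+y < x * t+t" using y by simp
    also have "\<dots> = Suc x * t" by simp
    also have "\<dots> \<le> q * t" using x by (intro mult_le_mono1) auto
    finally have m: "x * t+y < q * t" .
    have dm: "(x * t+y) div t = x" "(x * t+y) mod t = y" using y by auto
    show "kron A B $$ (i,x * t+y) * kron_vec a b $ (x * t+y) = (A $$ (i div s, x) * a $ x) * (B $$ (i mod s, y) * b $ y)"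
      using A B i' m y a b by (simp add: kron_entry kron_vec_def dm)
  qed
  also have "\<dots> = (\<Sum>x<q. A $$ (i div s, x) * a $ x) * (\<Sum>y<t. B $$ (i mod s, y) * b $ y)"
    by (simp add: sum_product)
  also have "\<dots> = (A *\<^sub>v a) $ (i div s) * (B *\<^sub>v b) $ (i mod s)"
    using multv_entry[OF A a ib(1)] multv_entry[OF B b ib(2)] by simp
  also have "\<dots> = kron_vec (A *\<^sub>v a) (B *\<^sub>v b) $ i"
    using A B i' by (simp add: kron_vec_def)
  finally show "(kron A B *\<^sub>v kron_vec a b) $ i = kron_vec (A *\<^sub>v a) (B *\<^sub>v b) $ i" .
qed

lemma kron_transpose: "transpose_mat (kron A B) = kron (transpose_mat A) (transpose_mat B)"
proof (rule eq_matI)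
  fix i j assume "i < dim_row (kron (transpose_mat A) (transpose_mat B))" "j < dim_col (kron (transpose_mat A) (transpose_mat B))"
  then have i: "i < dim_col A * dim_col B" and j: "j < dim_row A * dim_row B" by simp_all
  show "transpose_mat (kron A B) $$ (i, j) = kron (transpose_mat A) (transpose_mat B) $$ (i, j)"
    using divmod_bounds[OF i] divmod_bounds[OF j] i j by (simp add: kron_def)
qed auto

definition swi :: "nat \<Rightarrow> nat \<Rightarrow> nat" where
  "swi k i = (i mod k) * k + i div k"

definition Swm :: "nat \<Rightarrow> real mat" where
  "Swm k = mat (k * k) (k * k) (\<lambda>(i,j). if j = swi k i then 1 else 0)"

lemma swi_facts: assumes i: "i < k * k"
  shows "swi k i < k * k" "swi k i mod k = i div k" "swi k i div k = i mod k" "swi k (swi k i) = i"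
proof -
  have b: "i div k < k" "i mod k < k" using divmod_bounds[OF i] by auto
  have "swi k i < (i mod k) * k + k" using b by (simp add: swi_def)
  also have "\<dots> = Suc (i mod k) * k" by simp
  also have "\<dots> \<le> k * k" using b(2) Suc_le_eq mult_le_mono1 by blast
  finally show "swi k i < k * k" .
  show m: "swi k i mod k = i div k" using b by (simp add: swi_def)
  show d: "swi k i div k = i mod k" using b by (simp add: swi_def)
  show "swi k (swi k i) = i" unfolding swi_def[of k "swi k i"] m d by (simp add: mult.commute)
qed

lemma Swm_carrier: "Swm k \<in> carrier_mat (k * k) (k * k)" by (simp add: Swm_def)

lemma Swm_left: assumes M: "M \<in> carrier_mat (k * k) n"
  shows "Swm k * M = mat (k * k) n (\<lambda>(i,j). M $$ (swi k i, j))"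
proof (rule eq_matI)
  fix i j assume i: "i < dim_row (mat (k * k) n (\<lambda>(i,j). M $$ (swi k i, j)))"
    and j: "j < dim_col (mat (k * k) n (\<lambda>(i,j). M $$ (swi k i, j)))"
  then have i': "i < k * k" and j': "j < n" by auto
  have "(Swm k * M) $$ (i,j) = (\<Sum>m<k * k. Swm k $$ (i,m) * M $$ (m,j))"
    by (rule mult_entry[OF Swm_carrier M i' j'])
  also have "\<dots> = (\<Sum>m<k * k. if m = swi k i then M $$ (m,j) else 0)"
    by (rule sum.cong) (use i' in \<open>auto simp: Swm_def\<close>)
  also have "\<dots> = M $$ (swi k i, j)" using swi_facts[OF i'] by (simp add: sum.delta')
  finally show "(Swm k * M) $$ (i,j) = mat (k * k) n (\<lambda>(i,j). M $$ (swi k i, j)) $$ (i,j)" using i' j' by simp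
qed (use M in \<open>auto simp: Swm_def\<close>)

lemma Swm_right: assumes M: "M \<in> carrier_mat n (k * k)"
  shows "M * Swm k = mat n (k * k) (\<lambda>(i,j). M $$ (i, swi k j))"
proof (rule eq_matI)
  fix i j assume i: "i < dim_row (mat n (k * k) (\<lambda>(i,j). M $$ (i, swi k j)))"
    and j: "j < dim_col (mat n (k * k) (\<lambda>(i,j). M $$ (i, swi k j)))"
  then have i': "i < n" and j': "j < k * k" by auto
  have "(M * Swm k) $$ (i,j) = (\<Sum>m<k * k. M $$ (i,m) * Swm k $$ (m,j))"
    by (rule mult_entry[OF M Swm_carrier i' j'])
  also have "\<dots> = (\<Sum>m<k * k. if m = swi k j then M $$ (i,m) else 0)"
  proof (rule sum.cong)
    fix m assume m: "m \<in> {..<k * k}"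
    have "(j = swi k m) = (m = swi k j)" using swi_facts[OF j'] swi_facts[of m k] m by auto
    then show "M $$ (i,m) * Swm k $$ (m,j) = (if m = swi k j then M $$ (i,m) else 0)"
      using m j' by (auto simp: Swm_def)
  qed simp
  also have "\<dots> = M $$ (i, swi k j)" using swi_facts[OF j'] by (simp add: sum.delta')
  finally show "(M * Swm k) $$ (i,j) = mat n (k * k) (\<lambda>(i,j). M $$ (i, swi k j)) $$ (i,j)" using i' j' by simp
qed (use M in \<open>auto simp: Swm_def\<close>)

lemma Swm_multv: assumes v: "dim_vec v = k * k"
  shows "Swm k *\<^sub>v v = vec (k * k) (\<lambda>i. v $ swi k i)"
proof (rule eq_vecI)
  fix i assume "i < dim_vec (vec (k * k) (\<lambda>i. v $ swi k i))"
  then have i': "i < k * k" by simp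
  have "(Swm k *\<^sub>v v) $ i = (\<Sum>m<k * k. Swm k $$ (i,m) * v $ m)"
    by (rule multv_entry[OF Swm_carrier v i'])
  also have "\<dots> = (\<Sum>m<k * k. if m = swi k i then v $ m else 0)"
    by (rule sum.cong) (use i' in \<open>auto simp: Swm_def\<close>)
  also have "\<dots> = v $ swi k i" using swi_facts[OF i'] by (simp add: sum.delta')
  finally show "(Swm k *\<^sub>v v) $ i = vec (k * k) (\<lambda>i. v $ swi k i) $ i" using i' by simp
qed (simp add: Swm_def)

lemma Swm_transpose: "transpose_mat (Swm k) = Swm k"
proof (rule eq_matI)
  fix i j assume "i < dim_row (Swm k)" "j < dim_col (Swm k)"
  then have i: "i < k * k" and j: "j < k * k" by (auto simp: Swm_def)
  have "(i = swi k j) = (j = swi k i)" using swi_facts[OF i] swi_facts[OF j] by auto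
  then show "transpose_mat (Swm k) $$ (i,j) = Swm k $$ (i,j)" using i j by (simp add: Swm_def)
qed (auto simp: Swm_def)

lemma Swm_Swm: "Swm k * Swm k = 1\<^sub>m (k * k)"
  unfolding Swm_left[OF Swm_carrier]
proof (rule eq_matI)
  fix i j assume "i < dim_row (1\<^sub>m (k * k))" "j < dim_col (1\<^sub>m (k * k))"
  then have i: "i < k * k" and j: "j < k * k" by auto
  show "mat (k * k) (k * k) (\<lambda>(i, j). Swm k $$ (swi k i, j)) $$ (i, j) = 1\<^sub>m (k * k) $$ (i, j)"
    using i j swi_facts[OF i] by (simp add: Swm_def)
qed auto

lemma Swm_kron: assumes A: "A \<in> carrier_mat k k" and B: "B \<in> carrier_mat k k"
  shows "Swm k * kron A B = kron B A * Swm k"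
proof -
  have c1: "kron A B \<in> carrier_mat (k * k) (k * k)" and c2: "kron B A \<in> carrier_mat (k * k) (k * k)"
    using A B by auto
  show ?thesis unfolding Swm_left[OF c1] Swm_right[OF c2]
  proof (rule eq_matI)
    fix i j assume "i < dim_row (mat (k * k) (k * k) (\<lambda>(i, j). kron B A $$ (i, swi k j)))"
      "j < dim_col (mat (k * k) (k * k) (\<lambda>(i, j). kron B A $$ (i, swi k j)))"
    then have i: "i < k * k" and j: "j < k * k" by auto
    show "mat (k * k) (k * k) (\<lambda>(i, j). kron A B $$ (swi k i, j)) $$ (i, j) =
          mat (k * k) (k * k) (\<lambda>(i, j). kron B A $$ (i, swi k j)) $$ (i, j)"
      using i j A B swi_facts[OF i] swi_facts[OF j] by (simp add: kron_entry)
  qed auto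
qed

lemma W_Sw: "Wmat k * Swm k = Wmat k"
proof -
  show ?thesis unfolding Swm_right[OF Wmat_carrier]
  proof (rule eq_matI)
    fix l j assume "l < dim_row (Wmat k)" "j < dim_col (Wmat k)"
    then have l: "l < tri k" and j: "j < k * k" by (auto simp: Wmat_def)
    show "mat (tri k) (k * k) (\<lambda>(i, j). Wmat k $$ (i, swi k j)) $$ (l, j) = Wmat k $$ (l, j)"
      using l j swi_facts[OF j] by (simp add: Wmat_entry Ecoef_def)
  qed (auto simp: Wmat_def)
qed

lemma WtW: "transpose_mat (Wmat k) * Wmat k = (1/2) \<cdot>\<^sub>m (1\<^sub>m (k * k) + Swm k)"
proof (rule eq_matI)
  fix i j assume "i < dim_row ((1/2) \<cdot>\<^sub>m (1\<^sub>m (k * k) + Swm k))" "j < dim_col ((1/2) \<cdot>\<^sub>m (1\<^sub>m (k * k) + Swm k))"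
  then have i: "i < k * k" and j: "j < k * k" by (auto simp: Swm_def)
  have bi: "i div k < k" "i mod k < k" using divmod_bounds[OF i] by auto
  have bj: "j div k < k" "j mod k < k" using divmod_bounds[OF j] by auto
  have tW: "transpose_mat (Wmat k) \<in> carrier_mat (k * k) (tri k)" using Wmat_carrier by auto
  have "(transpose_mat (Wmat k) * Wmat k) $$ (i,j) = (\<Sum>l<tri k. transpose_mat (Wmat k) $$ (i,l) * Wmat k $$ (l,j))"
    by (rule mult_entry[OF tW Wmat_carrier i j])
  also have "\<dots> = (\<Sum>l<tri k. Ecoef (svec_pairs k ! l) (i mod k) (i div k) * Ecoef (svec_pairs k ! l) (j mod k) (j div k))"
    by (rule sum.cong) (use i j Wmat_carrier[of k] in \<open>auto simp: Wmat_entry\<close>)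
  also have "\<dots> = (\<Sum>p\<in>{(r,c). r \<le> c \<and> c < k}. Ecoef p (i mod k) (i div k) * Ecoef p (j mod k) (j div k))"
    by (rule sum_pairs)
  also have "\<dots> = (if i mod k = j mod k \<and> i div k = j div k then 1/2 else 0) + (if i mod k = j div k \<and> i div k = j mod k then 1/2 else 0)"
    by (rule Ecoef_sum) (use bi bj in auto)
  also have "\<dots> = (1/2) * ((if i = j then 1 else 0) + (if j = swi k i then 1 else 0))"
  proof -
    have e1: "(i mod k = j mod k \<and> i div k = j div k) = (i = j)"
      by (metis div_mod_decomp)
    have e2: "(i mod k = j div k \<and> i div k = j mod k) = (j = swi k i)"
      using swi_facts[OF i] by (metis div_mod_decomp swi_def)
    show ?thesis unfolding e1 e2 by simp
  qed
  also have "\<dots> = ((1/2) \<cdot>\<^sub>m (1\<^sub>m (k * k) + Swm k)) $$ (i,j)" using i j by (simp add: Swm_def)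
  finally show "(transpose_mat (Wmat k) * Wmat k) $$ (i,j) = ((1/2) \<cdot>\<^sub>m (1\<^sub>m (k * k) + Swm k)) $$ (i,j)" .
qed (auto simp: Wmat_def Swm_def)

lemma smult_mat_vec: "(A::real mat) \<in> carrier_mat n m \<Longrightarrow> v \<in> carrier_vec m \<Longrightarrow> (c \<cdot>\<^sub>m A) *\<^sub>v v = c \<cdot>\<^sub>v (A *\<^sub>v v)"
  by (rule eq_vecI) (auto simp: scalar_prod_def sum_distrib_left mult.assoc)

lemma eq_by_vec: assumes A: "(A::real mat) \<in> carrier_mat n m" and B: "B \<in> carrier_mat n m"
  and h: "\<And>u. u \<in> carrier_vec m \<Longrightarrow> A *\<^sub>v u = B *\<^sub>v u"
  shows "A = B"
proof (rule eq_matI)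
  fix i j assume i: "i < dim_row B" and j: "j < dim_col B"
  then have i': "i < n" and j': "j < m" using B by auto
  have "A $$ (i,j) = (A *\<^sub>v unit_vec m j) $ i" using A i' j' by simp
  also have "\<dots> = (B *\<^sub>v unit_vec m j) $ i" using h[of "unit_vec m j"] by simp
  also have "\<dots> = B $$ (i,j)" using B i' j' by simp
  finally show "A $$ (i,j) = B $$ (i,j)" .
qed (use A B in auto)

lemma Wt_carrier: "transpose_mat (Wmat k) \<in> carrier_mat (k * k) (tri k)"
  using Wmat_carrier by simp

lemma WtW_v: assumes v: "v \<in> carrier_vec (k * k)"
  shows "transpose_mat (Wmat k) *\<^sub>v (Wmat k *\<^sub>v v) = (1/2) \<cdot>\<^sub>v (v + Swm k *\<^sub>v v)"
proof -
  have "transpose_mat (Wmat k) *\<^sub>v (Wmat k *\<^sub>v v) = (transpose_mat (Wmat k) * Wmat k) *\<^sub>v v"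
    using assoc_mult_mat_vec[OF Wt_carrier Wmat_carrier v] by simp
  also have "\<dots> = (1/2) \<cdot>\<^sub>v ((1\<^sub>m (k * k) + Swm k) *\<^sub>v v)"
    unfolding WtW by (rule smult_mat_vec[of _ "k * k" "k * k"]) (use v Swm_carrier in auto)
  also have "(1\<^sub>m (k * k) + Swm k) *\<^sub>v v = v + Swm k *\<^sub>v v"
    using add_mult_distrib_mat_vec[OF one_carrier_mat Swm_carrier v] v by simp
  finally show ?thesis .
qed

lemma W_Sw_v: "v \<in> carrier_vec (k * k) \<Longrightarrow> Wmat k *\<^sub>v (Swm k *\<^sub>v v) = Wmat k *\<^sub>v v"
  using assoc_mult_mat_vec[OF Wmat_carrier Swm_carrier, of v] W_Sw by simp

lemma Sw_Wt: "Swm k * transpose_mat (Wmat k) = transpose_mat (Wmat k)"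
proof -
  have "transpose_mat (Wmat k * Swm k) = transpose_mat (Swm k) * transpose_mat (Wmat k)"
    by (rule transpose_mult[OF Wmat_carrier Swm_carrier])
  then show ?thesis using W_Sw Swm_transpose by simp
qed

lemma Sw_Wt_v: "u \<in> carrier_vec (tri k) \<Longrightarrow> Swm k *\<^sub>v (transpose_mat (Wmat k) *\<^sub>v u) = transpose_mat (Wmat k) *\<^sub>v u"
  using assoc_mult_mat_vec[OF Swm_carrier Wt_carrier, of u] Sw_Wt by simp

lemma Sw_kron_v: assumes A: "A \<in> carrier_mat k k" and B: "B \<in> carrier_mat k k" and v: "v \<in> carrier_vec (k * k)"
  shows "Swm k *\<^sub>v (kron A B *\<^sub>v v) = kron B A *\<^sub>v (Swm k *\<^sub>v v)"
proof -
  have c1: "kron A B \<in> carrier_mat (k * k) (k * k)" and c2: "kron B A \<in> carrier_mat (k * k) (k * k)"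
    using A B by auto
  have "Swm k *\<^sub>v (kron A B *\<^sub>v v) = (Swm k * kron A B) *\<^sub>v v"
    using assoc_mult_mat_vec[OF Swm_carrier c1 v] by simp
  also have "\<dots> = (kron B A * Swm k) *\<^sub>v v" using Swm_kron[OF A B] by simp
  also have "\<dots> = kron B A *\<^sub>v (Swm k *\<^sub>v v)" using assoc_mult_mat_vec[OF c2 Swm_carrier v] by simp
  finally show ?thesis .
qed

lemma Sw_kv: assumes a: "dim_vec a = k" and b: "dim_vec b = k"
  shows "Swm k *\<^sub>v kron_vec a b = kron_vec b a"
proof -
  have d: "dim_vec (kron_vec a b) = k * k" using a b by simp
  show ?thesis unfolding Swm_multv[OF d]
  proof (rule eq_vecI)
    fix i assume "i < dim_vec (kron_vec b a)"
    then have i: "i < k * k" using a b by simp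
    have bi: "i div k < k" "i mod k < k" using divmod_bounds[OF i] by auto
    show "vec (k * k) (\<lambda>i. kron_vec a b $ swi k i) $ i = kron_vec b a $ i"
      using i a b swi_facts[OF i] by (simp add: kron_vec_def)
  qed (use a b in simp)
qed

lemma kron_mult_v: assumes A: "A \<in> carrier_mat k k" and B: "B \<in> carrier_mat k k"
  and C: "C \<in> carrier_mat k k" and D: "D \<in> carrier_mat k k" and v: "v \<in> carrier_vec (k * k)"
  shows "kron A B *\<^sub>v (kron C D *\<^sub>v v) = kron (A * C) (B * D) *\<^sub>v v"
proof -
  have c1: "kron A B \<in> carrier_mat (k * k) (k * k)" and c2: "kron C D \<in> carrier_mat (k * k) (k * k)"
    using A B C D by auto
  show ?thesis using assoc_mult_mat_vec[OF c1 c2 v] kron_mult[OF A C B D] by simp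
qed

lemma skron_sq: "A \<in> carrier_mat k k \<Longrightarrow> skron A B = Wmat k * kron A B * transpose_mat (Wmat k)"
  by (simp add: skron_def)

lemma skron_carrier: "A \<in> carrier_mat k k \<Longrightarrow> B \<in> carrier_mat k k \<Longrightarrow> skron A B \<in> carrier_mat (tri k) (tri k)"
proof -
  assume A: "A \<in> carrier_mat k k" and B: "B \<in> carrier_mat k k"
  have c1: "kron A B \<in> carrier_mat (k * k) (k * k)" using A B by auto
  show ?thesis unfolding skron_sq[OF A]
    using mult_carrier_mat[OF mult_carrier_mat[OF Wmat_carrier c1] Wt_carrier] .
qed

lemma skron_v: assumes A: "A \<in> carrier_mat k k" and B: "B \<in> carrier_mat k k" and u: "u \<in> carrier_vec (tri k)"
  shows "skron A B *\<^sub>v u = Wmat k *\<^sub>v (kron A B *\<^sub>v (transpose_mat (Wmat k) *\<^sub>v u))"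
proof -
  have c1: "kron A B \<in> carrier_mat (k * k) (k * k)" using A B by auto
  have "skron A B *\<^sub>v u = (Wmat k * kron A B * transpose_mat (Wmat k)) *\<^sub>v u" using A by (simp add: skron_sq)
  also have "\<dots> = (Wmat k * kron A B) *\<^sub>v (transpose_mat (Wmat k) *\<^sub>v u)"
    by (rule assoc_mult_mat_vec) (use A B u Wmat_carrier[of k] in auto)
  also have "\<dots> = Wmat k *\<^sub>v (kron A B *\<^sub>v (transpose_mat (Wmat k) *\<^sub>v u))"
    by (rule assoc_mult_mat_vec) (use A B u Wmat_carrier[of k] in auto)
  finally show ?thesis .
qed

lemma half_sum: "(x::real vec) \<in> carrier_vec n \<Longrightarrow> (1/2) \<cdot>\<^sub>v (x + x) = x"
  by (rule eq_vecI) auto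

lemma vecm_carrier: "A \<in> carrier_mat k k \<Longrightarrow> vecm A \<in> carrier_vec (k * k)"
  by (simp add: vecm_def)

lemma skron_row_W: "dim_vec a = k \<Longrightarrow> skron_row a b = Wmat k *\<^sub>v kron_vec a b"
  by (simp add: skron_row_def)

lemma skron_row_S: assumes S: "S \<in> carrier_mat k k" and a: "dim_vec a = k" and b: "dim_vec b = k"
  shows "skron_row (S *\<^sub>v a) (S *\<^sub>v b) = skron S S *\<^sub>v skron_row a b"
proof -
  let ?W = "Wmat k" and ?kv = "kron_vec a b" and ?k = "kron S S"
  let ?z = "kron_vec (S *\<^sub>v a) (S *\<^sub>v b)"
  have dS: "dim_row S = k" "dim_col S = k" using S by auto
  have kv: "?kv \<in> carrier_vec (k * k)" by (rule carrier_vecI) (simp only: kron_vec_dim a b)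
  have kS: "?k \<in> carrier_mat (k * k) (k * k)" by (rule carrier_matI) (simp_all only: kron_dims dS)
  have Sa: "dim_vec (S *\<^sub>v a) = k" "dim_vec (S *\<^sub>v b) = k" by (simp_all only: dim_mult_mat_vec dS)
  have z: "?z \<in> carrier_vec (k * k)" by (rule carrier_vecI) (simp only: kron_vec_dim Sa)
  have sr: "skron_row a b \<in> carrier_vec (tri k)" unfolding skron_row_W[OF a] by (rule mult_mat_vec_carrier[OF Wmat_carrier kv])
  have e1: "?k *\<^sub>v ?kv = ?z" by (rule kron_multv[OF S S a b])
  have e2: "?k *\<^sub>v (Swm k *\<^sub>v ?kv) = Swm k *\<^sub>v ?z"
  proof -
    have "?k *\<^sub>v (Swm k *\<^sub>v ?kv) = ?k *\<^sub>v kron_vec b a" using Sw_kv[OF a b] by simp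
    also have "\<dots> = kron_vec (S *\<^sub>v b) (S *\<^sub>v a)" by (rule kron_multv[OF S S b a])
    also have "\<dots> = Swm k *\<^sub>v ?z" using Sw_kv[OF Sa] by simp
    finally show ?thesis .
  qed
  have "skron S S *\<^sub>v skron_row a b = ?W *\<^sub>v (?k *\<^sub>v (transpose_mat ?W *\<^sub>v (?W *\<^sub>v ?kv)))"
    using skron_v[OF S S sr] a by (simp add: skron_row_W)
  also have "\<dots> = ?W *\<^sub>v (?k *\<^sub>v ((1/2) \<cdot>\<^sub>v (?kv + Swm k *\<^sub>v ?kv)))" using WtW_v[OF kv] by simp
  also have "?k *\<^sub>v ((1/2) \<cdot>\<^sub>v (?kv + Swm k *\<^sub>v ?kv)) = (1/2) \<cdot>\<^sub>v (?z + Swm k *\<^sub>v ?z)"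
  proof -
    have sk: "Swm k *\<^sub>v ?kv \<in> carrier_vec (k * k)" by (rule mult_mat_vec_carrier[OF Swm_carrier kv])
    have "?k *\<^sub>v ((1/2) \<cdot>\<^sub>v (?kv + Swm k *\<^sub>v ?kv)) = (1/2) \<cdot>\<^sub>v (?k *\<^sub>v (?kv + Swm k *\<^sub>v ?kv))"
      using mult_mat_vec[OF kS] kv sk by auto
    also have "?k *\<^sub>v (?kv + Swm k *\<^sub>v ?kv) = ?k *\<^sub>v ?kv + ?k *\<^sub>v (Swm k *\<^sub>v ?kv)"
      using mult_add_distrib_mat_vec[OF kS kv sk] .
    finally show ?thesis using e1 e2 by simp
  qed
  also have "?W *\<^sub>v ((1/2) \<cdot>\<^sub>v (?z + Swm k *\<^sub>v ?z)) = (1/2) \<cdot>\<^sub>v (?W *\<^sub>v ?z + ?W *\<^sub>v (Swm k *\<^sub>v ?z))"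
  proof -
    have sz: "Swm k *\<^sub>v ?z \<in> carrier_vec (k * k)" by (rule mult_mat_vec_carrier[OF Swm_carrier z])
    show ?thesis using mult_mat_vec[OF Wmat_carrier] mult_add_distrib_mat_vec[OF Wmat_carrier z sz] z sz by auto
  qed
  also have "\<dots> = ?W *\<^sub>v ?z" using W_Sw_v[OF z] half_sum[of "?W *\<^sub>v ?z" "tri k"] Wmat_carrier[of k] by auto
  also have "\<dots> = skron_row (S *\<^sub>v a) (S *\<^sub>v b)" using Sa by (simp add: skron_row_W)
  finally show ?thesis by simp
qed

lemma kron_carrier_k: "A \<in> carrier_mat k k \<Longrightarrow> B \<in> carrier_mat k k \<Longrightarrow> kron A B \<in> carrier_mat (k * k) (k * k)"
  by (rule carrier_matI) auto

lemma skron_comm: assumes S: "S \<in> carrier_mat k k" and M: "M \<in> carrier_mat k k" and B': "B' \<in> carrier_mat k k"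
  and BS: "B' * S = S * M"
  shows "skron (1\<^sub>m k) B' * skron S S = skron S S * skron (1\<^sub>m k) M"
proof (rule eq_by_vec)
  have I: "1\<^sub>m k \<in> carrier_mat k k" by simp
  show c1: "skron (1\<^sub>m k) B' * skron S S \<in> carrier_mat (tri k) (tri k)"
    by (rule mult_carrier_mat[OF skron_carrier[OF I B'] skron_carrier[OF S S]])
  show c2: "skron S S * skron (1\<^sub>m k) M \<in> carrier_mat (tri k) (tri k)"
    by (rule mult_carrier_mat[OF skron_carrier[OF S S] skron_carrier[OF I M]])
  fix u :: "real vec" assume u: "u \<in> carrier_vec (tri k)"
  let ?W = "Wmat k" and ?Wt = "transpose_mat (Wmat k)" and ?w = "transpose_mat (Wmat k) *\<^sub>v u"
  have w: "?w \<in> carrier_vec (k * k)" by (rule mult_mat_vec_carrier[OF Wt_carrier u])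
  have Sww: "Swm k *\<^sub>v ?w = ?w" by (rule Sw_Wt_v[OF u])
  have SM: "S * M \<in> carrier_mat k k" by (rule mult_carrier_mat[OF S M])
  have kSS: "kron S S \<in> carrier_mat (k * k) (k * k)" by (rule kron_carrier_k[OF S S])
  have k1B: "kron (1\<^sub>m k) B' \<in> carrier_mat (k * k) (k * k)" by (rule kron_carrier_k[OF I B'])
  have k1M: "kron (1\<^sub>m k) M \<in> carrier_mat (k * k) (k * k)" by (rule kron_carrier_k[OF I M])
  have kSSM: "kron S (S * M) \<in> carrier_mat (k * k) (k * k)" by (rule kron_carrier_k[OF S SM])
  let ?y = "kron S S *\<^sub>v ?w"
  have y: "?y \<in> carrier_vec (k * k)" by (rule mult_mat_vec_carrier[OF kSS w])
  have Sy: "Swm k *\<^sub>v ?y = ?y" using Sw_kron_v[OF S S w] Sww by simp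
  have WWy: "?Wt *\<^sub>v (?W *\<^sub>v ?y) = ?y" using WtW_v[OF y] Sy half_sum[OF y] by simp
  have sSSu: "skron S S *\<^sub>v u = ?W *\<^sub>v ?y" by (rule skron_v[OF S S u])
  have sSSu_c: "skron S S *\<^sub>v u \<in> carrier_vec (tri k)" by (rule mult_mat_vec_carrier[OF skron_carrier[OF S S] u])
  have "(skron (1\<^sub>m k) B' * skron S S) *\<^sub>v u = skron (1\<^sub>m k) B' *\<^sub>v (skron S S *\<^sub>v u)"
    using assoc_mult_mat_vec[OF skron_carrier[OF I B'] skron_carrier[OF S S] u] .
  also have "\<dots> = ?W *\<^sub>v (kron (1\<^sub>m k) B' *\<^sub>v (?Wt *\<^sub>v (?W *\<^sub>v ?y)))"
    using skron_v[OF I B' sSSu_c] sSSu by simp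
  also have "\<dots> = ?W *\<^sub>v (kron (1\<^sub>m k) B' *\<^sub>v ?y)" using WWy by simp
  also have "kron (1\<^sub>m k) B' *\<^sub>v ?y = kron S (S * M) *\<^sub>v ?w"
    using kron_mult_v[OF I B' S S w] BS S by simp
  finally have L: "(skron (1\<^sub>m k) B' * skron S S) *\<^sub>v u = ?W *\<^sub>v (kron S (S * M) *\<^sub>v ?w)" .
  let ?y = "kron (1\<^sub>m k) M *\<^sub>v ?w"
  have y: "?y \<in> carrier_vec (k * k)" by (rule mult_mat_vec_carrier[OF k1M w])
  have Sy: "Swm k *\<^sub>v ?y = kron M (1\<^sub>m k) *\<^sub>v ?w" using Sw_kron_v[OF I M w] Sww by simp
  have s1Mu: "skron (1\<^sub>m k) M *\<^sub>v u = ?W *\<^sub>v ?y" by (rule skron_v[OF I M u])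
  have s1Mu_c: "skron (1\<^sub>m k) M *\<^sub>v u \<in> carrier_vec (tri k)" by (rule mult_mat_vec_carrier[OF skron_carrier[OF I M] u])
  have kMw: "kron M (1\<^sub>m k) *\<^sub>v ?w \<in> carrier_vec (k * k)" by (rule mult_mat_vec_carrier[OF kron_carrier_k[OF M I] w])
  have e1: "kron S S *\<^sub>v ?y = kron S (S * M) *\<^sub>v ?w" using kron_mult_v[OF S S I M w] S by simp
  have e2: "?W *\<^sub>v (kron S S *\<^sub>v (kron M (1\<^sub>m k) *\<^sub>v ?w)) = ?W *\<^sub>v (kron S (S * M) *\<^sub>v ?w)"
  proof -
    have "kron S S *\<^sub>v (kron M (1\<^sub>m k) *\<^sub>v ?w) = kron (S * M) S *\<^sub>v ?w" using kron_mult_v[OF S S M I w] S by simp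
    also have "\<dots> = kron (S * M) S *\<^sub>v (Swm k *\<^sub>v ?w)" using Sww by simp
    also have "\<dots> = Swm k *\<^sub>v (kron S (S * M) *\<^sub>v ?w)" using Sw_kron_v[OF S SM w] by simp
    finally have "kron S S *\<^sub>v (kron M (1\<^sub>m k) *\<^sub>v ?w) = Swm k *\<^sub>v (kron S (S * M) *\<^sub>v ?w)" .
    then show ?thesis using W_Sw_v[of "kron S (S * M) *\<^sub>v ?w" k] kSSM w by auto
  qed
  have "(skron S S * skron (1\<^sub>m k) M) *\<^sub>v u = skron S S *\<^sub>v (skron (1\<^sub>m k) M *\<^sub>v u)"
    using assoc_mult_mat_vec[OF skron_carrier[OF S S] skron_carrier[OF I M] u] .
  also have "\<dots> = ?W *\<^sub>v (kron S S *\<^sub>v (?Wt *\<^sub>v (?W *\<^sub>v ?y)))"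
    using skron_v[OF S S s1Mu_c] s1Mu by simp
  also have "\<dots> = ?W *\<^sub>v (kron S S *\<^sub>v ((1/2) \<cdot>\<^sub>v (?y + kron M (1\<^sub>m k) *\<^sub>v ?w)))"
    using WtW_v[OF y] Sy by simp
  also have "\<dots> = (1/2) \<cdot>\<^sub>v (?W *\<^sub>v (kron S S *\<^sub>v ?y) + ?W *\<^sub>v (kron S S *\<^sub>v (kron M (1\<^sub>m k) *\<^sub>v ?w)))"
  proof -
    have a1: "kron S S *\<^sub>v ?y \<in> carrier_vec (k * k)" by (rule mult_mat_vec_carrier[OF kSS y])
    have a2: "kron S S *\<^sub>v (kron M (1\<^sub>m k) *\<^sub>v ?w) \<in> carrier_vec (k * k)" by (rule mult_mat_vec_carrier[OF kSS kMw])
    show ?thesis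
      using mult_mat_vec[OF kSS] mult_add_distrib_mat_vec[OF kSS y kMw]
        mult_mat_vec[OF Wmat_carrier] mult_add_distrib_mat_vec[OF Wmat_carrier a1 a2] y kMw a1 a2 by auto
  qed
  also have "\<dots> = ?W *\<^sub>v (kron S (S * M) *\<^sub>v ?w)"
    unfolding e1 e2 by (rule half_sum[of _ "tri k"]) (use Wmat_carrier[of k] kSSM w in auto)
  finally show "(skron (1\<^sub>m k) B' * skron S S) *\<^sub>v u = (skron S S * skron (1\<^sub>m k) M) *\<^sub>v u"
    using L by simp
qed

lemma vecm_mult: assumes A: "A \<in> carrier_mat k k" and Z: "Z \<in> carrier_mat k k" and B: "B \<in> carrier_mat k k"
  shows "vecm (A * Z * B) = kron (transpose_mat B) A *\<^sub>v vecm Z"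
proof (rule eq_vecI)
  have AZ: "A * Z \<in> carrier_mat k k" by (rule mult_carrier_mat[OF A Z])
  have AZB: "A * Z * B \<in> carrier_mat k k" by (rule mult_carrier_mat[OF AZ B])
  have kc: "kron (transpose_mat B) A \<in> carrier_mat (k * k) (k * k)" by (rule kron_carrier_k) (use A B in auto)
  have vZ: "dim_vec (vecm Z) = k * k" using Z by (simp add: vecm_def)
  show "dim_vec (vecm (A * Z * B)) = dim_vec (kron (transpose_mat B) A *\<^sub>v vecm Z)"
    using AZB kc by (simp add: vecm_def)
  fix i assume "i < dim_vec (kron (transpose_mat B) A *\<^sub>v vecm Z)"
  then have i: "i < k * k" using A B by simp
  have bi: "i div k < k" "i mod k < k" using divmod_bounds[OF i] by auto
  have "vecm (A * Z * B) $ i = (A * Z * B) $$ (i mod k, i div k)" using A B i by (simp add: vecm_def)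
  also have "\<dots> = (\<Sum>q<k. (A * Z) $$ (i mod k, q) * B $$ (q, i div k))" by (rule mult_entry[OF AZ B bi(2) bi(1)])
  also have "\<dots> = (\<Sum>q<k. (\<Sum>p<k. A $$ (i mod k, p) * Z $$ (p, q)) * B $$ (q, i div k))"
    by (rule sum.cong) (simp_all add: mult_entry[OF A Z bi(2)])
  also have "\<dots> = (\<Sum>q<k. \<Sum>p<k. B $$ (q, i div k) * A $$ (i mod k, p) * Z $$ (p, q))"
    by (rule sum.cong) (simp_all add: sum_distrib_left sum_distrib_right mult_ac)
  also have "\<dots> = (\<Sum>q<k. \<Sum>p<k. kron (transpose_mat B) A $$ (i, q * k + p) * vecm Z $ (q * k + p))"
  proof (intro sum.cong refl)
    fix q p assume q: "q \<in> {..<k}" and p: "p \<in> {..<k}"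
    have "q * k + p < q * k + k" using p by simp
    also have "\<dots> = Suc q * k" by simp
    also have "\<dots> \<le> k * k" using q Suc_le_eq mult_le_mono1 by blast
    finally have m: "q * k + p < k * k" .
    have dm: "(q * k + p) div k = q" "(q * k + p) mod k = p" using p by auto
    show "B $$ (q, i div k) * A $$ (i mod k, p) * Z $$ (p, q) = kron (transpose_mat B) A $$ (i, q * k + p) * vecm Z $ (q * k + p)"
      using A B Z i m bi q p by (simp add: kron_entry vecm_def dm)
  qed
  also have "\<dots> = (\<Sum>m<k * k. kron (transpose_mat B) A $$ (i, m) * vecm Z $ m)" by (rule sum_split[symmetric])
  also have "\<dots> = (kron (transpose_mat B) A *\<^sub>v vecm Z) $ i" by (rule multv_entry[OF kc vZ i, symmetric])
  finally show "vecm (A * Z * B) $ i = (kron (transpose_mat B) A *\<^sub>v vecm Z) $ i" .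
qed

lemma transpose_skron: assumes A: "A \<in> carrier_mat k k" and B: "B \<in> carrier_mat k k"
  shows "transpose_mat (skron A B) = skron (transpose_mat A) (transpose_mat B)"
proof -
  have kc: "kron A B \<in> carrier_mat (k * k) (k * k)" by (rule kron_carrier_k[OF A B])
  have c1: "Wmat k * kron A B \<in> carrier_mat (tri k) (k * k)" by (rule mult_carrier_mat[OF Wmat_carrier kc])
  have At: "transpose_mat A \<in> carrier_mat k k" using A by simp
  have "transpose_mat (skron A B) = transpose_mat (Wmat k * kron A B * transpose_mat (Wmat k))" by (simp add: skron_sq[OF A])
  also have "\<dots> = transpose_mat (transpose_mat (Wmat k)) * transpose_mat (Wmat k * kron A B)"
    by (rule transpose_mult[OF c1 Wt_carrier])
  also have "transpose_mat (Wmat k * kron A B) = transpose_mat (kron A B) * transpose_mat (Wmat k)"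
    by (rule transpose_mult[OF Wmat_carrier kc])
  also have "transpose_mat (transpose_mat (Wmat k)) * (transpose_mat (kron A B) * transpose_mat (Wmat k))
     = Wmat k * transpose_mat (kron A B) * transpose_mat (Wmat k)"
  proof -
    have kt: "transpose_mat (kron A B) \<in> carrier_mat (k * k) (k * k)" using kc by simp
    show ?thesis using assoc_mult_mat[OF Wmat_carrier kt Wt_carrier] by simp
  qed
  also have "\<dots> = skron (transpose_mat A) (transpose_mat B)" by (simp add: skron_sq[OF At] kron_transpose)
  finally show ?thesis .
qed

lemma svec_transform: assumes S: "S \<in> carrier_mat k k" and Si: "Si \<in> carrier_mat k k" and Y: "Y \<in> carrier_mat k k"
  and inv: "Si * S = 1\<^sub>m k"
  shows "transpose_mat (skron S S) *\<^sub>v svec (transpose_mat Si * Y * Si) = svec Y"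
proof -
  let ?T = "transpose_mat S" and ?Z = "transpose_mat Si * Y * Si" and ?W = "Wmat k"
  have T: "?T \<in> carrier_mat k k" using S by simp
  have Ti: "transpose_mat Si \<in> carrier_mat k k" using Si by simp
  have Z: "?Z \<in> carrier_mat k k" by (rule mult_carrier_mat[OF mult_carrier_mat[OF Ti Y] Si])
  have vZ: "vecm ?Z \<in> carrier_vec (k * k)" by (rule vecm_carrier[OF Z])
  have kT: "kron ?T ?T \<in> carrier_mat (k * k) (k * k)" by (rule kron_carrier_k[OF T T])
  have svZ: "svec ?Z = ?W *\<^sub>v vecm ?Z" using Z Si Ti by (simp add: svec_def)
  have svZc: "svec ?Z \<in> carrier_vec (tri k)" unfolding svZ by (rule mult_mat_vec_carrier[OF Wmat_carrier vZ])
  let ?x = "kron ?T ?T *\<^sub>v vecm ?Z"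
  have x: "?x \<in> carrier_vec (k * k)" by (rule mult_mat_vec_carrier[OF kT vZ])
  have sx: "Swm k *\<^sub>v vecm ?Z \<in> carrier_vec (k * k)" by (rule mult_mat_vec_carrier[OF Swm_carrier vZ])
  have "transpose_mat (skron S S) *\<^sub>v svec ?Z = skron ?T ?T *\<^sub>v svec ?Z" using transpose_skron[OF S S] by simp
  also have "\<dots> = ?W *\<^sub>v (kron ?T ?T *\<^sub>v (transpose_mat ?W *\<^sub>v (?W *\<^sub>v vecm ?Z)))"
    using skron_v[OF T T svZc] svZ by simp
  also have "\<dots> = ?W *\<^sub>v (kron ?T ?T *\<^sub>v ((1/2) \<cdot>\<^sub>v (vecm ?Z + Swm k *\<^sub>v vecm ?Z)))"
    using WtW_v[OF vZ] by simp
  also have "\<dots> = (1/2) \<cdot>\<^sub>v (?W *\<^sub>v ?x + ?W *\<^sub>v (kron ?T ?T *\<^sub>v (Swm k *\<^sub>v vecm ?Z)))"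
  proof -
    have a2: "kron ?T ?T *\<^sub>v (Swm k *\<^sub>v vecm ?Z) \<in> carrier_vec (k * k)" by (rule mult_mat_vec_carrier[OF kT sx])
    have "kron ?T ?T *\<^sub>v ((1/2) \<cdot>\<^sub>v (vecm ?Z + Swm k *\<^sub>v vecm ?Z)) = (1/2) \<cdot>\<^sub>v (?x + kron ?T ?T *\<^sub>v (Swm k *\<^sub>v vecm ?Z))"
      using mult_mat_vec[OF kT] mult_add_distrib_mat_vec[OF kT vZ sx] vZ sx by simp
    then show ?thesis
      using mult_mat_vec[OF Wmat_carrier] mult_add_distrib_mat_vec[OF Wmat_carrier x a2] x a2 by simp
  qed
  also have "kron ?T ?T *\<^sub>v (Swm k *\<^sub>v vecm ?Z) = Swm k *\<^sub>v ?x" using Sw_kron_v[OF T T vZ] by simp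
  also have "?W *\<^sub>v (Swm k *\<^sub>v ?x) = ?W *\<^sub>v ?x" by (rule W_Sw_v[OF x])
  also have "(1/2) \<cdot>\<^sub>v (?W *\<^sub>v ?x + ?W *\<^sub>v ?x) = ?W *\<^sub>v ?x"
    by (rule half_sum[OF mult_mat_vec_carrier[OF Wmat_carrier x]])
  also have "?x = vecm (?T * ?Z * S)" by (rule vecm_mult[OF T Z S, symmetric])
  also have "?T * ?Z * S = Y"
  proof -
    have "?T * ?Z * S = (?T * transpose_mat Si) * Y * (Si * S)"
      using S Si Y T Ti by (simp add: assoc_mult_mat[of _ k k _ k _ k])
    also have "?T * transpose_mat Si = transpose_mat (Si * S)" by (rule transpose_mult[OF Si S, symmetric])
    finally show ?thesis using inv Y by simp
  qed
  finally show ?thesis using Y by (simp add: svec_def)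
qed

lemma minv_props: assumes A: "(A::real mat) \<in> carrier_mat n n" and inv: "invertible_mat A"
  shows "minv A \<in> carrier_mat n n" "A * minv A = 1\<^sub>m n" "minv A * A = 1\<^sub>m n"
proof -
  have ex: "\<exists>B. inverts_mat A B \<and> inverts_mat B A" using inv by (simp add: invertible_mat_def)
  have h: "inverts_mat A (minv A) \<and> inverts_mat (minv A) A"
    unfolding minv_def by (rule someI_ex[OF ex])
  have AB: "A * minv A = 1\<^sub>m n" using h A by (simp add: inverts_mat_def)
  have BA: "minv A * A = 1\<^sub>m (dim_row (minv A))" using h by (simp add: inverts_mat_def)
  have c: "dim_col (minv A) = n" using arg_cong[OF AB, of dim_col] by simp
  have r: "dim_row (minv A) = n" using arg_cong[OF BA, of dim_col] A by simp
  show "minv A \<in> carrier_mat n n" using c r by auto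
  show "A * minv A = 1\<^sub>m n" by (rule AB)
  show "minv A * A = 1\<^sub>m n" using BA r by simp
qed

lemma invertible_of_left: assumes A: "(A::real mat) \<in> carrier_mat n n" and B: "B \<in> carrier_mat n n"
  and BA: "B * A = 1\<^sub>m n" shows "invertible_mat A"
proof -
  have AB: "A * B = 1\<^sub>m n" by (rule mat_mult_left_right_inverse[OF B A BA])
  show ?thesis unfolding invertible_mat_def inverts_mat_def using A B AB BA by auto
qed

lemma offs_Suc: "offs ds (Suc j) = offs ds j + ds j" by (simp add: offs_def)

lemma offs_mono: "i \<le> j \<Longrightarrow> offs ds i \<le> offs ds j"
  unfolding offs_def by (rule sum_mono2) auto

lemma blk_ex: "a < offs ds N \<Longrightarrow> \<exists>j<N. offs ds j \<le> a \<and> a < offs ds (Suc j)"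
proof (induction N)
  case 0 then show ?case by (simp add: offs_def)
next
  case (Suc N)
  show ?case
  proof (cases "a < offs ds N")
    case True then show ?thesis using Suc.IH by (meson less_SucI)
  next
    case False then show ?thesis using Suc.prems by auto
  qed
qed

lemma blk_uniq: assumes "offs ds i \<le> a" "a < offs ds (Suc i)" "offs ds j \<le> a" "a < offs ds (Suc j)"
  shows "i = j"
proof (rule ccontr)
  assume "i \<noteq> j"
  then consider "Suc i \<le> j" | "Suc j \<le> i" by linarith
  then show False
  proof cases
    case 1 then have "offs ds (Suc i) \<le> offs ds j" by (rule offs_mono)
    then show False using assms by linarith
  next
    case 2 then have "offs ds (Suc j) \<le> offs ds i" by (rule offs_mono)
    then show False using assms by linarith
  qed
qed

definition blk :: "(nat \<Rightarrow> nat) \<Rightarrow> nat \<Rightarrow> nat \<Rightarrow> nat" where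
  "blk ds N a = (THE j. j < N \<and> offs ds j \<le> a \<and> a < offs ds (Suc j))"

lemma blk_props: assumes a: "a < offs ds N"
  shows "blk ds N a < N" "offs ds (blk ds N a) \<le> a" "a < offs ds (Suc (blk ds N a))"
proof -
  obtain j where j: "j < N" "offs ds j \<le> a" "a < offs ds (Suc j)" using blk_ex[OF a] by blast
  have "blk ds N a = j" unfolding blk_def
    by (rule the_equality) (use j blk_uniq in blast)+
  then show "blk ds N a < N" "offs ds (blk ds N a) \<le> a" "a < offs ds (Suc (blk ds N a))" using j by auto
qed

lemma blk_eq: assumes "j < N" "offs ds j \<le> a" "a < offs ds (Suc j)" shows "blk ds N a = j"
  unfolding blk_def by (rule the_equality) (use assms blk_uniq in blast)+

lemma block_diag_entry: assumes a: "a < offs ds N" and b: "b < offs ds N"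
  shows "block_diag N ds Ss $$ (a,b) = (if blk ds N a = blk ds N b then Ss (blk ds N a) $$ (a - offs ds (blk ds N a), b - offs ds (blk ds N a)) else 0)"
proof -
  note pa = blk_props[OF a] and pb = blk_props[OF b]
  have iff: "(\<exists>j<N. offs ds j \<le> a \<and> a < offs ds (Suc j) \<and> offs ds j \<le> b \<and> b < offs ds (Suc j)) = (blk ds N a = blk ds N b)"
  proof
    assume "\<exists>j<N. offs ds j \<le> a \<and> a < offs ds (Suc j) \<and> offs ds j \<le> b \<and> b < offs ds (Suc j)"
    then obtain j where "j<N" "offs ds j \<le> a" "a < offs ds (Suc j)" "offs ds j \<le> b" "b < offs ds (Suc j)" by blast
    then show "blk ds N a = blk ds N b" using blk_eq by metis
  next
    assume "blk ds N a = blk ds N b"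
    then show "\<exists>j<N. offs ds j \<le> a \<and> a < offs ds (Suc j) \<and> offs ds j \<le> b \<and> b < offs ds (Suc j)"
      using pa pb by metis
  qed
  have e: "block_diag N ds Ss $$ (a,b) = (if (\<exists>j<N. offs ds j \<le> a \<and> a < offs ds (Suc j) \<and> offs ds j \<le> b \<and> b < offs ds (Suc j))
     then Ss (blk ds N a) $$ (a - offs ds (blk ds N a), b - offs ds (blk ds N a)) else 0)"
    unfolding block_diag_def Let_def blk_def by (simp only: index_mat(1) a b prod.case)
  show ?thesis by (simp only: e iff)
qed

lemma sum_block: assumes j: "j < N"
  shows "(\<Sum>b<offs ds N. if blk ds N b = j then F (b - offs ds j) else 0) = (\<Sum>b'<ds j. F b')"
proof -
  let ?o = "offs ds j"
  have sub: "{?o..<?o + ds j} \<subseteq> {..<offs ds N}"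
    using offs_mono[of "Suc j" N ds] j by (auto simp: offs_Suc)
  have z: "\<forall>i\<in>{..<offs ds N} - {?o..<?o + ds j}. (if blk ds N i = j then F (i - ?o) else 0) = 0"
  proof
    fix i assume i: "i \<in> {..<offs ds N} - {?o..<?o + ds j}"
    have "blk ds N i \<noteq> j"
    proof
      assume e: "blk ds N i = j"
      have "i < offs ds N" using i by simp
      from blk_props[OF this] e show False using i by (auto simp: offs_Suc)
    qed
    then show "(if blk ds N i = j then F (i - ?o) else 0) = 0" by simp
  qed
  have "(\<Sum>b<offs ds N. if blk ds N b = j then F (b - ?o) else 0) = (\<Sum>b\<in>{?o..<?o + ds j}. if blk ds N b = j then F (b - ?o) else 0)"
    by (rule sum.mono_neutral_right[OF _ sub z]) simp
  also have "\<dots> = (\<Sum>b\<in>{?o..<?o + ds j}. F (b - ?o))"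
  proof (rule sum.cong)
    fix b assume b: "b \<in> {?o..<?o + ds j}"
    have "blk ds N b = j" by (rule blk_eq) (use j b in \<open>auto simp: offs_Suc\<close>)
    then show "(if blk ds N b = j then F (b - ?o) else 0) = F (b - ?o)" by simp
  qed simp
  also have "\<dots> = (\<Sum>b'<ds j. F b')"
  proof -
    have "(\<Sum>b\<in>{0 + ?o..<ds j + ?o}. F (b - ?o)) = (\<Sum>b\<in>{0..<ds j}. F (b + ?o - ?o))"
      by (rule sum.shift_bounds_nat_ivl)
    then show ?thesis by (simp add: add.commute atLeast0LessThan)
  qed
  finally show ?thesis .
qed

lemma block_diag_carrier: "block_diag N ds Ss \<in> carrier_mat (offs ds N) (offs ds N)"
  by (simp add: block_diag_def Let_def)

lemma block_diag_mult: assumes AB: "\<And>i. i < N \<Longrightarrow> (As i :: real mat) * Bs i = 1\<^sub>m (ds i)"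
  and Ac: "\<And>i. i < N \<Longrightarrow> As i \<in> carrier_mat (ds i) (ds i)"
  and Bc: "\<And>i. i < N \<Longrightarrow> Bs i \<in> carrier_mat (ds i) (ds i)"
  shows "block_diag N ds As * block_diag N ds Bs = 1\<^sub>m (offs ds N)"
proof (rule eq_matI)
  fix a c assume "a < dim_row (1\<^sub>m (offs ds N))" "c < dim_col (1\<^sub>m (offs ds N))"
  then have a: "a < offs ds N" and c: "c < offs ds N" by auto
  let ?j = "blk ds N a" and ?o = "offs ds (blk ds N a)"
  note pa = blk_props[OF a] and pc = blk_props[OF c]
  have "(block_diag N ds As * block_diag N ds Bs) $$ (a,c) = (\<Sum>b<offs ds N. block_diag N ds As $$ (a,b) * block_diag N ds Bs $$ (b,c))"
    by (rule mult_entry[OF block_diag_carrier block_diag_carrier a c])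
  also have "\<dots> = (\<Sum>b<offs ds N. if blk ds N b = ?j then
        (if ?j = blk ds N c then As ?j $$ (a - ?o, b - ?o) * Bs ?j $$ (b - ?o, c - ?o) else 0) else 0)"
    by (rule sum.cong) (use a c in \<open>auto simp: block_diag_entry\<close>)
  also have "\<dots> = (\<Sum>b'<ds ?j. if ?j = blk ds N c then As ?j $$ (a - ?o, b') * Bs ?j $$ (b', c - ?o) else 0)"
    using sum_block[OF pa(1), of ds "\<lambda>b'. if ?j = blk ds N c then As ?j $$ (a - ?o, b') * Bs ?j $$ (b', c - ?o) else 0"]
    by simp
  also have "\<dots> = 1\<^sub>m (offs ds N) $$ (a,c)"
  proof (cases "?j = blk ds N c")
    case True
    have a': "a - ?o < ds ?j" and c': "c - ?o < ds ?j" using pa pc True by (auto simp: offs_Suc)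
    have "(\<Sum>b'<ds ?j. As ?j $$ (a - ?o, b') * Bs ?j $$ (b', c - ?o)) = (As ?j * Bs ?j) $$ (a - ?o, c - ?o)"
      by (rule mult_entry[symmetric, OF Ac[OF pa(1)] Bc[OF pa(1)] a' c'])
    also have "\<dots> = (if a = c then 1 else 0)" using AB[OF pa(1)] a' c' pa pc True by auto
    finally show ?thesis using True a c by simp
  next
    case False
    then have "a \<noteq> c" by auto
    then show ?thesis using False a c by simp
  qed
  finally show "(block_diag N ds As * block_diag N ds Bs) $$ (a,c) = 1\<^sub>m (offs ds N) $$ (a,c)" .
qed (auto simp: block_diag_def Let_def)

lemma prod_integrable:
  fixes f g :: "real \<Rightarrow> real"
  assumes f: "f measurable_on {a..b}" and g: "g measurable_on {a..b}"
    and f2: "(\<lambda>x. (f x)^2) integrable_on {a..b}" and g2: "(\<lambda>x. (g x)^2) integrable_on {a..b}"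
  shows "(\<lambda>x. f x * g x) integrable_on {a..b}"
proof -
  have L: "{a..b} \<in> sets lebesgue" by simp
  have m: "(\<lambda>x. f x * g x) measurable_on {a..b}"
    using measurable_on_bilinear[OF bilinear_times f g] .
  have mb: "(\<lambda>x. f x * g x) \<in> borel_measurable (lebesgue_on {a..b})"
    using m measurable_on_iff_borel_measurable[OF L] by blast
  have h: "(\<lambda>x. ((f x)^2 + (g x)^2) / 2) integrable_on {a..b}"
    using integrable_add[OF f2 g2] by simp
  have bd: "\<bar>f x * g x\<bar> \<le> ((f x)^2 + (g x)^2) / 2" for x
  proof -
    have "0 \<le> (\<bar>f x\<bar> - \<bar>g x\<bar>)^2" by simp
    then show ?thesis by (simp add: power2_eq_square algebra_simps abs_mult)
  qed
  show ?thesis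
    by (rule measurable_bounded_by_integrable_imp_integrable_real[OF mb h _ L]) (use bd in auto)
qed

lemma sr_entry: assumes a: "dim_vec a = k" and b: "dim_vec b = k" and d: "d < tri k"
  shows "skron_row a b $ d = (\<Sum>m<k * k. Wmat k $$ (d,m) * (a $ (m div k) * b $ (m mod k)))"
proof -
  have kv: "dim_vec (kron_vec a b) = k * k" using a b by simp
  have "skron_row a b $ d = (\<Sum>m<k * k. Wmat k $$ (d,m) * kron_vec a b $ m)"
    unfolding skron_row_W[OF a] by (rule multv_entry[OF Wmat_carrier kv d])
  also have "\<dots> = (\<Sum>m<k * k. Wmat k $$ (d,m) * (a $ (m div k) * b $ (m mod k)))"
    by (rule sum.cong) (use a b in \<open>auto simp: kron_vec_def\<close>)
  finally show ?thesis .
qed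

lemma sr_integrable: fixes x y :: "real \<Rightarrow> real vec" assumes dx: "\<And>\<tau>. dim_vec (x \<tau>) = k" and dy: "\<And>\<tau>. dim_vec (y \<tau>) = k"
  and int: "\<And>p q. p < k \<Longrightarrow> q < k \<Longrightarrow> (\<lambda>\<tau>. x \<tau> $ p * y \<tau> $ q) integrable_on I"
  and d: "d < tri k"
  shows "(\<lambda>\<tau>. skron_row (x \<tau>) (y \<tau>) $ d) integrable_on I"
proof -
  have "(\<lambda>\<tau>. \<Sum>m<k * k. Wmat k $$ (d,m) * (x \<tau> $ (m div k) * y \<tau> $ (m mod k))) integrable_on I"
  proof (rule integrable_sum)
    fix m assume m: "m \<in> {..<k * k}"
    have "m div k < k" "m mod k < k" using divmod_bounds[of m k k] m by auto
    then show "(\<lambda>\<tau>. Wmat k $$ (d,m) * (x \<tau> $ (m div k) * y \<tau> $ (m mod k))) integrable_on I"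
      by (intro integrable_on_mult_right int)
  qed simp
  then show ?thesis using sr_entry[OF dx dy d] by simp
qed

lemma Int_transform: fixes x y :: "real \<Rightarrow> real vec" assumes S: "S \<in> carrier_mat k k"
  and dx: "\<And>\<tau>. dim_vec (x \<tau>) = k" and dy: "\<And>\<tau>. dim_vec (y \<tau>) = k"
  and int: "\<And>r p q. r < l \<Longrightarrow> p < k \<Longrightarrow> q < k \<Longrightarrow> (\<lambda>\<tau>. x \<tau> $ p * y \<tau> $ q) integrable_on {t r..t (Suc r)}"
  shows "Int_mat k t l (\<lambda>\<tau>. S *\<^sub>v x \<tau>) (\<lambda>\<tau>. S *\<^sub>v y \<tau>) = Int_mat k t l x y * transpose_mat (skron S S)"
proof -
  let ?T = "skron S S"
  have T: "?T \<in> carrier_mat (tri k) (tri k)" by (rule skron_carrier[OF S S])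
  have I: "Int_mat k t l x y \<in> carrier_mat l (tri k)" unfolding Int_mat_def by (rule mat_carrier)
  have Tt: "transpose_mat ?T \<in> carrier_mat (tri k) (tri k)" using T by simp
  have P: "Int_mat k t l x y * transpose_mat ?T \<in> carrier_mat l (tri k)" by (rule mult_carrier_mat[OF I Tt])
  have I2: "Int_mat k t l (\<lambda>\<tau>. S *\<^sub>v x \<tau>) (\<lambda>\<tau>. S *\<^sub>v y \<tau>) \<in> carrier_mat l (tri k)" unfolding Int_mat_def by (rule mat_carrier)
  show ?thesis
  proof (rule eq_matI)
  fix r c assume r0: "r < dim_row (Int_mat k t l x y * transpose_mat ?T)" and c0: "c < dim_col (Int_mat k t l x y * transpose_mat ?T)"
  have r: "r < l" using r0[unfolded carrier_matD(1)[OF P]] .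
  have c: "c < tri k" using c0[unfolded carrier_matD(2)[OF P]] .
  let ?I = "{t r..t (Suc r)}"
  have src: "\<And>\<tau>. skron_row (x \<tau>) (y \<tau>) \<in> carrier_vec (tri k)"
  proof -
    fix \<tau>
    have "kron_vec (x \<tau>) (y \<tau>) \<in> carrier_vec (k * k)" by (rule carrier_vecI) (simp only: kron_vec_dim dx dy)
    then show "skron_row (x \<tau>) (y \<tau>) \<in> carrier_vec (tri k)" unfolding skron_row_W[OF dx] by (rule mult_mat_vec_carrier[OF Wmat_carrier])
  qed
  have "Int_mat k t l (\<lambda>\<tau>. S *\<^sub>v x \<tau>) (\<lambda>\<tau>. S *\<^sub>v y \<tau>) $$ (r,c) = integral ?I (\<lambda>\<tau>. skron_row (S *\<^sub>v x \<tau>) (S *\<^sub>v y \<tau>) $ c)"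
    using r c by (simp add: Int_mat_def)
  also have "\<dots> = integral ?I (\<lambda>\<tau>. \<Sum>d<tri k. ?T $$ (c,d) * skron_row (x \<tau>) (y \<tau>) $ d)"
  proof (rule integral_cong)
    fix \<tau>
    have "skron_row (S *\<^sub>v x \<tau>) (S *\<^sub>v y \<tau>) = ?T *\<^sub>v skron_row (x \<tau>) (y \<tau>)" by (rule skron_row_S[OF S dx dy])
    then show "skron_row (S *\<^sub>v x \<tau>) (S *\<^sub>v y \<tau>) $ c = (\<Sum>d<tri k. ?T $$ (c,d) * skron_row (x \<tau>) (y \<tau>) $ d)"
      using multv_entry[OF T _ c, of "skron_row (x \<tau>) (y \<tau>)"] src[of \<tau>] by simp
  qed
  also have "\<dots> = (\<Sum>d<tri k. integral ?I (\<lambda>\<tau>. ?T $$ (c,d) * skron_row (x \<tau>) (y \<tau>) $ d))"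
  proof (rule integral_sum)
    fix d assume d: "d \<in> {..<tri k}"
    show "(\<lambda>\<tau>. ?T $$ (c,d) * skron_row (x \<tau>) (y \<tau>) $ d) integrable_on ?I"
      by (rule integrable_on_mult_right, rule sr_integrable[OF dx dy]) (use int r d in auto)
  qed simp
  also have "\<dots> = (\<Sum>d<tri k. Int_mat k t l x y $$ (r,d) * transpose_mat ?T $$ (d,c))"
  proof (rule sum.cong)
    fix d assume d: "d \<in> {..<tri k}"
    have "integral ?I (\<lambda>\<tau>. ?T $$ (c,d) * skron_row (x \<tau>) (y \<tau>) $ d) = ?T $$ (c,d) * integral ?I (\<lambda>\<tau>. skron_row (x \<tau>) (y \<tau>) $ d)"
      using integral_cmul[of ?I "?T $$ (c,d)" "\<lambda>\<tau>. skron_row (x \<tau>) (y \<tau>) $ d"] by simp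
    then show "integral ?I (\<lambda>\<tau>. ?T $$ (c,d) * skron_row (x \<tau>) (y \<tau>) $ d) = Int_mat k t l x y $$ (r,d) * transpose_mat ?T $$ (d,c)"
      using r c d T by (simp add: Int_mat_def)
  qed simp
  also have "\<dots> = (Int_mat k t l x y * transpose_mat ?T) $$ (r,c)" by (rule mult_entry[OF I Tt r c, symmetric])
  finally show "Int_mat k t l (\<lambda>\<tau>. S *\<^sub>v x \<tau>) (\<lambda>\<tau>. S *\<^sub>v y \<tau>) $$ (r,c) = (Int_mat k t l x y * transpose_mat ?T) $$ (r,c)" .
  qed (simp_all only: carrier_matD[OF I2] carrier_matD[OF P])
qed

lemma Int_cong: fixes x y y' :: "real \<Rightarrow> real vec" assumes "\<And>r \<tau>. r < l \<Longrightarrow> \<tau> \<in> {t r..t (Suc r)} \<Longrightarrow> y \<tau> = y' \<tau>"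
  shows "Int_mat k t l x y = Int_mat k t l x y'"
proof -
  have "\<And>r c. r < l \<Longrightarrow> integral {t r..t (Suc r)} (\<lambda>\<tau>. skron_row (x \<tau>) (y \<tau>) $ c) = integral {t r..t (Suc r)} (\<lambda>\<tau>. skron_row (x \<tau>) (y' \<tau>) $ c)"
    by (rule integral_cong) (simp add: assms)
  then show ?thesis unfolding Int_mat_def by (intro eq_matI) simp_all
qed

lemma delta_transform: fixes x :: "real \<Rightarrow> real vec" assumes S: "S \<in> carrier_mat k k" and dx: "\<And>\<tau>. dim_vec (x \<tau>) = k"
  shows "delta_mat k t l (\<lambda>\<tau>. S *\<^sub>v x \<tau>) (\<lambda>\<tau>. S *\<^sub>v x \<tau>) = delta_mat k t l x x * transpose_mat (skron S S)"
proof -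
  let ?T = "skron S S"
  have T: "?T \<in> carrier_mat (tri k) (tri k)" by (rule skron_carrier[OF S S])
  have D: "delta_mat k t l x x \<in> carrier_mat l (tri k)" unfolding delta_mat_def by (rule mat_carrier)
  have Tt: "transpose_mat ?T \<in> carrier_mat (tri k) (tri k)" using T by simp
  have P: "delta_mat k t l x x * transpose_mat ?T \<in> carrier_mat l (tri k)" by (rule mult_carrier_mat[OF D Tt])
  have D2: "delta_mat k t l (\<lambda>\<tau>. S *\<^sub>v x \<tau>) (\<lambda>\<tau>. S *\<^sub>v x \<tau>) \<in> carrier_mat l (tri k)" unfolding delta_mat_def by (rule mat_carrier)
  show ?thesis
  proof (rule eq_matI)
  fix r c assume r0: "r < dim_row (delta_mat k t l x x * transpose_mat ?T)" and c0: "c < dim_col (delta_mat k t l x x * transpose_mat ?T)"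
  have r: "r < l" using r0[unfolded carrier_matD(1)[OF P]] .
  have c: "c < tri k" using c0[unfolded carrier_matD(2)[OF P]] .
  let ?a = "x (t (Suc r)) + x (t r)" and ?b = "x (t (Suc r)) - x (t r)"
  have xc: "x \<tau> \<in> carrier_vec k" for \<tau> by (rule carrier_vecI[OF dx])
  have da: "dim_vec ?a = k" "dim_vec ?b = k" by (simp_all only: index_add_vec(2) index_minus_vec(2) dx)
  have e1: "S *\<^sub>v x (t (Suc r)) + S *\<^sub>v x (t r) = S *\<^sub>v ?a"
    by (rule mult_add_distrib_mat_vec[OF S xc xc, symmetric])
  have e2: "S *\<^sub>v x (t (Suc r)) - S *\<^sub>v x (t r) = S *\<^sub>v ?b"
    by (rule mult_minus_distrib_mat_vec[OF S xc xc, symmetric])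
  have src: "skron_row ?a ?b \<in> carrier_vec (tri k)"
  proof -
    have "kron_vec ?a ?b \<in> carrier_vec (k * k)" by (rule carrier_vecI) (simp only: kron_vec_dim da)
    then show ?thesis unfolding skron_row_W[OF da(1)] by (rule mult_mat_vec_carrier[OF Wmat_carrier])
  qed
  have "delta_mat k t l (\<lambda>\<tau>. S *\<^sub>v x \<tau>) (\<lambda>\<tau>. S *\<^sub>v x \<tau>) $$ (r,c) = skron_row (S *\<^sub>v ?a) (S *\<^sub>v ?b) $ c"
    using r c e1 e2 by (simp add: delta_mat_def)
  also have "\<dots> = (?T *\<^sub>v skron_row ?a ?b) $ c" using skron_row_S[OF S da] by simp
  also have "\<dots> = (\<Sum>d<tri k. ?T $$ (c,d) * skron_row ?a ?b $ d)"
    using multv_entry[OF T _ c, of "skron_row ?a ?b"] src by simp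
  also have "\<dots> = (\<Sum>d<tri k. delta_mat k t l x x $$ (r,d) * transpose_mat ?T $$ (d,c))"
    by (rule sum.cong) (use r c T in \<open>auto simp: delta_mat_def\<close>)
  also have "\<dots> = (delta_mat k t l x x * transpose_mat ?T) $$ (r,c)" by (rule mult_entry[OF D Tt r c, symmetric])
  finally show "delta_mat k t l (\<lambda>\<tau>. S *\<^sub>v x \<tau>) (\<lambda>\<tau>. S *\<^sub>v x \<tau>) $$ (r,c) = (delta_mat k t l x x * transpose_mat ?T) $$ (r,c)" .
  qed (simp_all only: carrier_matD[OF D2] carrier_matD[OF P])
qed

lemma t_mono_le: assumes tm: "\<forall>r<l. (t::nat \<Rightarrow> real) r < t (Suc r)"
  shows "i \<le> i' \<Longrightarrow> i' \<le> l \<Longrightarrow> t i \<le> t i'"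
proof (induction i')
  case 0 then show ?case by simp
next
  case (Suc i')
  show ?case
  proof (cases "i = Suc i'")
    case True then show ?thesis by simp
  next
    case False
    then have "i \<le> i'" using Suc.prems by simp
    then have "t i \<le> t i'" using Suc.IH Suc.prems by simp
    also have "t i' < t (Suc i')" using tm Suc.prems by simp
    finally show ?thesis by simp
  qed
qed

theorem theorem4:
  fixes N l :: nat and ns ms :: "nat \<Rightarrow> nat" and j :: nat
    and f :: "real vec \<Rightarrow> real vec" and g :: "real vec \<Rightarrow> real mat"
    and Amat Bmat K Q R :: "real mat" and Ss :: "nat \<Rightarrow> real mat"
    and t :: "nat \<Rightarrow> real" and x u :: "real \<Rightarrow> real vec"
  defines "n \<equiv> offs ns N" and "m \<equiv> offs ms N"
  defines "Ajj \<equiv> blk_diag_entry ns ns j Amat" and "Bjj \<equiv> blk_diag_entry ns ms j Bmat"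
  defines "xj \<equiv> (\<lambda>\<tau>. blk_vec ns j (x \<tau>))"
  defines "gu \<equiv> (\<lambda>\<tau>. blk_rows ns j (g (x \<tau>)) *\<^sub>v u \<tau>)"
  defines "wj \<equiv> (\<lambda>\<tau>. blk_vec ns j (f (x \<tau>)) - Ajj *\<^sub>v xj \<tau>)"
  defines "Qij \<equiv> Q + transpose_mat K * R * K"
  defines "Areg \<equiv> reg_A (ns j) t l xj gu wj (Bjj * K)"
  defines "bvec \<equiv> reg_b (ns j) t l xj Qij"
  defines "S \<equiv> block_diag N ns Ss" and "Sj \<equiv> Ss j"
  defines "Sji \<equiv> minv (Ss j)"
  defines "xtj \<equiv> (\<lambda>\<tau>. Sj *\<^sub>v xj \<tau>)"
  defines "gtu \<equiv> (\<lambda>\<tau>. Sj *\<^sub>v (blk_rows ns j (g (minv S *\<^sub>v (S *\<^sub>v x \<tau>))) *\<^sub>v u \<tau>))"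
  defines "wtj \<equiv> (\<lambda>\<tau>. Sj *\<^sub>v blk_vec ns j (f (minv S *\<^sub>v (S *\<^sub>v x \<tau>))) - (Sj * Ajj * Sji) *\<^sub>v xtj \<tau>)"
  defines "Ktij \<equiv> K * Sji"
  defines "Qtij \<equiv> transpose_mat Sji * Q * Sji + transpose_mat Ktij * R * Ktij"
  defines "Atil \<equiv> reg_A (ns j) t l xtj gtu wtj ((Sj * Bjj) * Ktij)"
  defines "btil \<equiv> reg_b (ns j) t l xtj Qtij"
  assumes j: "j < N"
    and fg_dims: "\<forall>y. dim_vec y = n \<longrightarrow> dim_vec (f y) = n \<and> g y \<in> carrier_mat n m"
    and f0: "f (0\<^sub>v n) = 0\<^sub>v n"
    and lipschitz: "\<exists>r>0. \<exists>L. \<forall>y z. dim_vec y = n \<longrightarrow> dim_vec z = n \<longrightarrow> vnorm y \<le> r \<longrightarrow> vnorm z \<le> r \<longrightarrow>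
          vnorm (f y - f z) \<le> L * vnorm (y - z) \<and> vnorm (vecm (g y - g z)) \<le> L * vnorm (y - z)"
    and A_dim: "Amat \<in> carrier_mat n n"
    and A_lin: "\<forall>\<epsilon>>0. \<exists>\<delta>>0. \<forall>h. dim_vec h = n \<longrightarrow> vnorm h < \<delta> \<longrightarrow>
          vnorm (f h - Amat *\<^sub>v h) \<le> \<epsilon> * vnorm h"
    and B_lin: "Bmat = g (0\<^sub>v n)"
    and Q: "psd_mat (ns j) Q" and R: "pd_mat (ms j) R"
    and K: "K \<in> carrier_mat (ms j) (ns j)" and hurw: "hurwitz (Ajj - Bjj * K)"
    and t_mono: "\<forall>r<l. t r < t (Suc r)"
    and xu_dims: "\<forall>\<tau>\<in>{t 0..t l}. dim_vec (x \<tau>) = n \<and> dim_vec (u \<tau>) = m"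
    and traj: "\<forall>\<tau>\<in>{t 0..t l}. \<forall>i<n.
          ((\<lambda>s. x s $ i) has_real_derivative (f (x \<tau>) + g (x \<tau>) *\<^sub>v u \<tau>) $ i) (at \<tau> within {t 0..t l})"
    and x_sq: "sq_integrable_on n x (t 0) (t l)" and u_sq: "sq_integrable_on m u (t 0) (t l)"
    and gu_sq: "sq_integrable_on (ns j) gu (t 0) (t l)" and wj_sq: "sq_integrable_on (ns j) wj (t 0) (t l)"
    and S_inv: "\<forall>i<N. Ss i \<in> carrier_mat (ns i) (ns i) \<and> invertible_mat (Ss i)"
  shows "(\<forall>P. pd_mat (ns j) P \<longrightarrow>
            (Areg *\<^sub>v svec P = bvec \<longleftrightarrow> Atil *\<^sub>v svec (transpose_mat Sji * P * Sji) = btil))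
         \<and> Atil = Areg * transpose_mat (skron Sj Sj)
         \<and> btil = bvec"
proof -
  let ?k = "ns j"
  have Sc: "Sj \<in> carrier_mat ?k ?k" and Sinvt: "invertible_mat Sj" using S_inv j unfolding Sj_def by blast+
  have Sic: "Sji \<in> carrier_mat ?k ?k" "Sj * Sji = 1\<^sub>m ?k" "Sji * Sj = 1\<^sub>m ?k"
    using minv_props[OF Sc Sinvt] unfolding Sji_def Sj_def by blast+
  have Scar: "S \<in> carrier_mat n n" unfolding S_def n_def by (rule block_diag_carrier)
  have Sinv_car: "block_diag N ns (\<lambda>i. minv (Ss i)) \<in> carrier_mat n n" unfolding n_def by (rule block_diag_carrier)
  have "block_diag N ns (\<lambda>i. minv (Ss i)) * S = 1\<^sub>m n"
    unfolding S_def n_def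
  proof (rule block_diag_mult)
    fix i assume i: "i < N"
    have c: "Ss i \<in> carrier_mat (ns i) (ns i)" and iv: "invertible_mat (Ss i)" using S_inv i by blast+
    show "minv (Ss i) * Ss i = 1\<^sub>m (ns i)" by (rule minv_props(3)[OF c iv])
    show "minv (Ss i) \<in> carrier_mat (ns i) (ns i)" by (rule minv_props(1)[OF c iv])
    show "Ss i \<in> carrier_mat (ns i) (ns i)" by (rule c)
  qed
  then have Sinvbl: "invertible_mat S" by (rule invertible_of_left[OF Scar Sinv_car])
  have mS: "minv S * S = 1\<^sub>m n" and mSc: "minv S \<in> carrier_mat n n"
    using minv_props[OF Scar Sinvbl] by blast+
  have Sback: "minv S *\<^sub>v (S *\<^sub>v v) = v" if v: "dim_vec v = n" for v
  proof -
    have vc: "v \<in> carrier_vec n" by (rule carrier_vecI[OF v])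
    have "minv S *\<^sub>v (S *\<^sub>v v) = (minv S * S) *\<^sub>v v" by (rule assoc_mult_mat_vec[OF mSc Scar vc, symmetric])
    also have "\<dots> = v" unfolding mS by (rule one_mult_mat_vec[OF vc])
    finally show ?thesis .
  qed
  have inI: "\<tau> \<in> {t 0..t l}" if r: "r < l" and tau: "\<tau> \<in> {t r..t (Suc r)}" for r \<tau>
  proof -
    have "t 0 \<le> t r" by (rule t_mono_le[OF t_mono]) (use r in auto)
    moreover have "t (Suc r) \<le> t l" by (rule t_mono_le[OF t_mono]) (use r in auto)
    ultimately show ?thesis using tau by auto
  qed
  have dimx: "dim_vec (x \<tau>) = n" if "\<tau> \<in> {t 0..t l}" for \<tau> using xu_dims that by blast
  have xj_dim: "\<And>\<tau>. dim_vec (xj \<tau>) = ?k" unfolding xj_def blk_vec_def by simp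
  have gu_dim: "\<And>\<tau>. dim_vec (gu \<tau>) = ?k" unfolding gu_def blk_rows_def by simp
  have Ajj_c: "Ajj \<in> carrier_mat ?k ?k" unfolding Ajj_def blk_diag_entry_def by (rule mat_carrier)
  have Bjj_c: "Bjj \<in> carrier_mat ?k (ms j)" unfolding Bjj_def blk_diag_entry_def by (rule mat_carrier)
  have bf_dim: "\<And>y. dim_vec (blk_vec ns j y) = ?k" unfolding blk_vec_def by simp
  have wj_dim: "\<And>\<tau>. dim_vec (wj \<tau>) = ?k"
  proof -
    fix \<tau>
    have "dim_vec (Ajj *\<^sub>v xj \<tau>) = ?k" using Ajj_c by simp
    then show "dim_vec (wj \<tau>) = ?k" unfolding wj_def by simp
  qed
  have xjc: "\<And>\<tau>. xj \<tau> \<in> carrier_vec ?k" by (rule carrier_vecI[OF xj_dim])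
  have gtu_eq: "gtu \<tau> = Sj *\<^sub>v gu \<tau>" if "\<tau> \<in> {t 0..t l}" for \<tau>
    unfolding gtu_def gu_def using Sback[OF dimx[OF that]] by simp
  have wtj_eq: "wtj \<tau> = Sj *\<^sub>v wj \<tau>" if "\<tau> \<in> {t 0..t l}" for \<tau>
  proof -
    let ?a = "blk_vec ns j (f (x \<tau>))" and ?b = "Ajj *\<^sub>v xj \<tau>"
    have ac: "?a \<in> carrier_vec ?k" by (rule carrier_vecI[OF bf_dim])
    have bc: "?b \<in> carrier_vec ?k" by (rule mult_mat_vec_carrier[OF Ajj_c xjc])
    have SA: "Sj * Ajj \<in> carrier_mat ?k ?k" by (rule mult_carrier_mat[OF Sc Ajj_c])
    have SAS: "Sj * Ajj * Sji \<in> carrier_mat ?k ?k" by (rule mult_carrier_mat[OF SA Sic(1)])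
    have "(Sj * Ajj * Sji) *\<^sub>v xtj \<tau> = (Sj * Ajj * Sji) *\<^sub>v (Sj *\<^sub>v xj \<tau>)" by (simp add: xtj_def)
    also have "\<dots> = ((Sj * Ajj * Sji) * Sj) *\<^sub>v xj \<tau>" by (rule assoc_mult_mat_vec[OF SAS Sc xjc, symmetric])
    also have "(Sj * Ajj * Sji) * Sj = (Sj * Ajj) * (Sji * Sj)" by (rule assoc_mult_mat[OF SA Sic(1) Sc])
    also have "\<dots> = Sj * Ajj" unfolding Sic(3) by (rule right_mult_one_mat[OF SA])
    also have "(Sj * Ajj) *\<^sub>v xj \<tau> = Sj *\<^sub>v ?b" by (rule assoc_mult_mat_vec[OF Sc Ajj_c xjc])
    finally have e: "(Sj * Ajj * Sji) *\<^sub>v xtj \<tau> = Sj *\<^sub>v ?b" .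
    have "wtj \<tau> = Sj *\<^sub>v ?a - Sj *\<^sub>v ?b" unfolding wtj_def using Sback[OF dimx[OF that]] e by simp
    also have "\<dots> = Sj *\<^sub>v (?a - ?b)" by (rule mult_minus_distrib_mat_vec[OF Sc ac bc, symmetric])
    finally show ?thesis unfolding wj_def .
  qed
  have I0sub: "{t r..t (Suc r)} \<subseteq> {t 0..t l}" if "r < l" for r using inI[OF that] by blast
  have gen: "(\<lambda>\<tau>. xj \<tau> $ p * z \<tau> $ q) integrable_on {t r..t (Suc r)}"
    if zq: "\<And>q. q < ?k \<Longrightarrow> (\<lambda>\<tau>. z \<tau> $ q) measurable_on {t 0..t l} \<and> (\<lambda>\<tau>. (z \<tau> $ q)^2) integrable_on {t 0..t l}"
      and xp: "(\<lambda>\<tau>. xj \<tau> $ p) measurable_on {t 0..t l} \<and> (\<lambda>\<tau>. (xj \<tau> $ p)^2) integrable_on {t 0..t l}"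
      and r: "r < l" and q: "q < ?k" for z :: "real \<Rightarrow> real vec" and r p q
  proof (rule integrable_on_subinterval[OF _ I0sub[OF r]])
    show "(\<lambda>\<tau>. xj \<tau> $ p * z \<tau> $ q) integrable_on {t 0..t l}"
      using prod_integrable[OF conjunct1[OF xp] conjunct1[OF zq[OF q]] conjunct2[OF xp] conjunct2[OF zq[OF q]]] .
  qed
  have xsq: "(\<lambda>\<tau>. xj \<tau> $ p) measurable_on {t 0..t l} \<and> (\<lambda>\<tau>. (xj \<tau> $ p)^2) integrable_on {t 0..t l}"
    if p: "p < ?k" for p
  proof -
    have e: "\<And>\<tau>. xj \<tau> $ p = x \<tau> $ (offs ns j + p)" using p unfolding xj_def blk_vec_def by simp
    have "offs ns j + p < offs ns (Suc j)" using p by (simp add: offs_Suc)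
    also have "\<dots> \<le> offs ns N" by (rule offs_mono) (use j in simp)
    finally have "offs ns j + p < n" unfolding n_def .
    then show ?thesis unfolding e by (rule x_sq[unfolded sq_integrable_on_def, rule_format])
  qed
  have gsq: "\<And>q. q < ?k \<Longrightarrow> (\<lambda>\<tau>. gu \<tau> $ q) measurable_on {t 0..t l} \<and> (\<lambda>\<tau>. (gu \<tau> $ q)^2) integrable_on {t 0..t l}"
    by (rule gu_sq[unfolded sq_integrable_on_def, rule_format])
  have wsq: "\<And>q. q < ?k \<Longrightarrow> (\<lambda>\<tau>. wj \<tau> $ q) measurable_on {t 0..t l} \<and> (\<lambda>\<tau>. (wj \<tau> $ q)^2) integrable_on {t 0..t l}"
    by (rule wj_sq[unfolded sq_integrable_on_def, rule_format])
  define T where "T = skron Sj Sj"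
  have Tc: "T \<in> carrier_mat (tri ?k) (tri ?k)" unfolding T_def by (rule skron_carrier[OF Sc Sc])
  have Ttc: "transpose_mat T \<in> carrier_mat (tri ?k) (tri ?k)" using Tc by simp
  have IX: "Int_mat ?k t l xtj xtj = Int_mat ?k t l xj xj * transpose_mat T"
    unfolding xtj_def T_def by (rule Int_transform[OF Sc xj_dim xj_dim]) (rule gen[OF xsq xsq], assumption+)
  have IG: "Int_mat ?k t l xtj gtu = Int_mat ?k t l xj gu * transpose_mat T"
  proof -
    have "Int_mat ?k t l xtj gtu = Int_mat ?k t l xtj (\<lambda>\<tau>. Sj *\<^sub>v gu \<tau>)"
      by (rule Int_cong) (use gtu_eq inI in blast)
    also have "\<dots> = Int_mat ?k t l xj gu * transpose_mat T"
      unfolding xtj_def T_def by (rule Int_transform[OF Sc xj_dim gu_dim]) (rule gen[OF gsq xsq], assumption+)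
    finally show ?thesis .
  qed
  have IW: "Int_mat ?k t l xtj wtj = Int_mat ?k t l xj wj * transpose_mat T"
  proof -
    have "Int_mat ?k t l xtj wtj = Int_mat ?k t l xtj (\<lambda>\<tau>. Sj *\<^sub>v wj \<tau>)"
      by (rule Int_cong) (use wtj_eq inI in blast)
    also have "\<dots> = Int_mat ?k t l xj wj * transpose_mat T"
      unfolding xtj_def T_def by (rule Int_transform[OF Sc xj_dim wj_dim]) (rule gen[OF wsq xsq], assumption+)
    finally show ?thesis .
  qed
  have DX: "delta_mat ?k t l xtj xtj = delta_mat ?k t l xj xj * transpose_mat T"
    unfolding xtj_def T_def by (rule delta_transform[OF Sc xj_dim])
  have Kc: "K \<in> carrier_mat (ms j) ?k" by (rule K)
  let ?M = "Bjj * K" and ?B = "Sj * Bjj * Ktij"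
  have Mc: "?M \<in> carrier_mat ?k ?k" by (rule mult_carrier_mat[OF Bjj_c Kc])
  have SB: "Sj * Bjj \<in> carrier_mat ?k (ms j)" by (rule mult_carrier_mat[OF Sc Bjj_c])
  have Ktc: "Ktij \<in> carrier_mat (ms j) ?k" unfolding Ktij_def by (rule mult_carrier_mat[OF Kc Sic(1)])
  have Bc: "?B \<in> carrier_mat ?k ?k" by (rule mult_carrier_mat[OF SB Ktc])
  have BS: "?B * Sj = Sj * ?M"
  proof -
    have "?B * Sj = (Sj * Bjj) * (Ktij * Sj)" by (rule assoc_mult_mat[OF SB Ktc Sc])
    also have "Ktij * Sj = K * (Sji * Sj)" unfolding Ktij_def by (rule assoc_mult_mat[OF Kc Sic(1) Sc])
    also have "\<dots> = K" using Sic(3) Kc by simp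
    also have "(Sj * Bjj) * K = Sj * ?M" by (rule assoc_mult_mat[OF Sc Bjj_c Kc])
    finally show ?thesis .
  qed
  have I1: "1\<^sub>m ?k \<in> carrier_mat ?k ?k" by simp
  have comm: "skron (1\<^sub>m ?k) ?B * T = T * skron (1\<^sub>m ?k) ?M"
    unfolding T_def by (rule skron_comm[OF Sc Mc Bc BS])
  have s1B: "skron (1\<^sub>m ?k) ?B \<in> carrier_mat (tri ?k) (tri ?k)" by (rule skron_carrier[OF I1 Bc])
  have s1M: "skron (1\<^sub>m ?k) ?M \<in> carrier_mat (tri ?k) (tri ?k)" by (rule skron_carrier[OF I1 Mc])
  have commT: "transpose_mat T * transpose_mat (skron (1\<^sub>m ?k) ?B) = transpose_mat (skron (1\<^sub>m ?k) ?M) * transpose_mat T"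
  proof -
    have "transpose_mat T * transpose_mat (skron (1\<^sub>m ?k) ?B) = transpose_mat (skron (1\<^sub>m ?k) ?B * T)"
      by (rule transpose_mult[OF s1B Tc, symmetric])
    also have "\<dots> = transpose_mat (T * skron (1\<^sub>m ?k) ?M)" unfolding comm ..
    also have "\<dots> = transpose_mat (skron (1\<^sub>m ?k) ?M) * transpose_mat T" by (rule transpose_mult[OF Tc s1M])
    finally show ?thesis .
  qed
  let ?X = "Int_mat ?k t l xj xj" and ?G = "Int_mat ?k t l xj gu" and ?Wm = "Int_mat ?k t l xj wj"
    and ?D = "delta_mat ?k t l xj xj" and ?Tt = "transpose_mat T"
    and ?C1 = "transpose_mat (skron (1\<^sub>m ?k) ?M)" and ?Bt = "transpose_mat (skron (1\<^sub>m ?k) ?B)"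
  have Xc: "?X \<in> carrier_mat l (tri ?k)" unfolding Int_mat_def by (rule mat_carrier)
  have Gc: "?G \<in> carrier_mat l (tri ?k)" unfolding Int_mat_def by (rule mat_carrier)
  have Wc: "?Wm \<in> carrier_mat l (tri ?k)" unfolding Int_mat_def by (rule mat_carrier)
  have Dc: "?D \<in> carrier_mat l (tri ?k)" unfolding delta_mat_def by (rule mat_carrier)
  have C1c: "?C1 \<in> carrier_mat (tri ?k) (tri ?k)" using s1M by simp
  have Btc: "?Bt \<in> carrier_mat (tri ?k) (tri ?k)" using s1B by simp
  have XC1: "?X * ?C1 \<in> carrier_mat l (tri ?k)" by (rule mult_carrier_mat[OF Xc C1c])
  have XTB: "(?X * ?Tt) * ?Bt = (?X * ?C1) * ?Tt"
  proof -
    have "(?X * ?Tt) * ?Bt = ?X * (?Tt * ?Bt)" by (rule assoc_mult_mat[OF Xc Ttc Btc])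
    also have "\<dots> = ?X * (?C1 * ?Tt)" unfolding commT ..
    also have "\<dots> = (?X * ?C1) * ?Tt" by (rule assoc_mult_mat[OF Xc C1c Ttc, symmetric])
    finally show ?thesis .
  qed
  have Areg_eq: "Areg = ?D - 2 \<cdot>\<^sub>m (?X * ?C1 + ?G + ?Wm)"
    unfolding Areg_def reg_A_def by simp
  have Atil_eq: "Atil = ?D * ?Tt - 2 \<cdot>\<^sub>m ((?X * ?Tt) * ?Bt + ?G * ?Tt + ?Wm * ?Tt)"
    unfolding Atil_def reg_A_def DX[symmetric] IX[symmetric] IG[symmetric] IW[symmetric] by simp
  have AT: "Atil = Areg * ?Tt"
  proof -
    have S1: "?X * ?C1 + ?G \<in> carrier_mat l (tri ?k)" using XC1 Gc by simp
    have S2: "?X * ?C1 + ?G + ?Wm \<in> carrier_mat l (tri ?k)" using S1 Wc by simp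
    have S3: "2 \<cdot>\<^sub>m (?X * ?C1 + ?G + ?Wm) \<in> carrier_mat l (tri ?k)" using S2 by simp
    have "Areg * ?Tt = ?D * ?Tt - (2 \<cdot>\<^sub>m (?X * ?C1 + ?G + ?Wm)) * ?Tt"
      unfolding Areg_eq by (rule minus_mult_distrib_mat[OF Dc S3 Ttc])
    also have "(2 \<cdot>\<^sub>m (?X * ?C1 + ?G + ?Wm)) * ?Tt = 2 \<cdot>\<^sub>m ((?X * ?C1 + ?G + ?Wm) * ?Tt)"
      by (rule mult_smult_assoc_mat[OF S2 Ttc])
    also have "(?X * ?C1 + ?G + ?Wm) * ?Tt = (?X * ?C1 + ?G) * ?Tt + ?Wm * ?Tt"
      by (rule add_mult_distrib_mat[OF S1 Wc Ttc])
    also have "(?X * ?C1 + ?G) * ?Tt = (?X * ?C1) * ?Tt + ?G * ?Tt"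
      by (rule add_mult_distrib_mat[OF XC1 Gc Ttc])
    finally show ?thesis unfolding Atil_eq XTB by simp
  qed
  have Qc: "Q \<in> carrier_mat ?k ?k" using Q unfolding psd_mat_def sym_mat_def by blast
  have Rc: "R \<in> carrier_mat (ms j) (ms j)" using R unfolding pd_mat_def sym_mat_def by blast
  have KRK: "transpose_mat K * R * K \<in> carrier_mat ?k ?k"
    by (rule mult_carrier_mat[OF mult_carrier_mat[OF _ Rc] Kc]) (use Kc in simp)
  have Qijc: "Qij \<in> carrier_mat ?k ?k" unfolding Qij_def using Qc KRK by simp
  have Sit: "transpose_mat Sji \<in> carrier_mat ?k ?k" using Sic(1) by simp
  have Qt_eq: "Qtij = transpose_mat Sji * Qij * Sji"
  proof -
    have Kt: "transpose_mat K \<in> carrier_mat ?k (ms j)" using Kc by simp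
    have e1: "transpose_mat Ktij = transpose_mat Sji * transpose_mat K"
      unfolding Ktij_def by (rule transpose_mult[OF Kc Sic(1)])
    have SiK: "transpose_mat Sji * transpose_mat K \<in> carrier_mat ?k (ms j)" by (rule mult_carrier_mat[OF Sit Kt])
    have "transpose_mat Ktij * R * Ktij = transpose_mat Sji * transpose_mat K * R * (K * Sji)"
      unfolding Ktij_def e1[unfolded Ktij_def] ..
    also have "\<dots> = transpose_mat Sji * (transpose_mat K * R * K) * Sji"
    proof -
      have a1: "transpose_mat Sji * transpose_mat K * R = transpose_mat Sji * (transpose_mat K * R)"
        by (rule assoc_mult_mat[OF Sit Kt Rc])
      have KR: "transpose_mat K * R \<in> carrier_mat ?k (ms j)" by (rule mult_carrier_mat[OF Kt Rc])
      have SKR: "transpose_mat Sji * (transpose_mat K * R) \<in> carrier_mat ?k (ms j)" by (rule mult_carrier_mat[OF Sit KR])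
      have a2: "transpose_mat Sji * (transpose_mat K * R) * (K * Sji) = (transpose_mat Sji * (transpose_mat K * R) * K) * Sji"
        by (rule assoc_mult_mat[OF SKR Kc Sic(1), symmetric])
      have a3: "transpose_mat Sji * (transpose_mat K * R) * K = transpose_mat Sji * (transpose_mat K * R * K)"
        by (rule assoc_mult_mat[OF Sit KR Kc])
      show ?thesis unfolding a1 a2 a3 ..
    qed
    finally have e2: "transpose_mat Ktij * R * Ktij = transpose_mat Sji * (transpose_mat K * R * K) * Sji" .
    have SQ: "transpose_mat Sji * Q \<in> carrier_mat ?k ?k" by (rule mult_carrier_mat[OF Sit Qc])
    have SKRK: "transpose_mat Sji * (transpose_mat K * R * K) \<in> carrier_mat ?k ?k" by (rule mult_carrier_mat[OF Sit KRK])
    have "transpose_mat Sji * Qij * Sji = (transpose_mat Sji * Q + transpose_mat Sji * (transpose_mat K * R * K)) * Sji"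
      unfolding Qij_def by (subst mult_add_distrib_mat[OF Sit Qc KRK]) (rule refl)
    also have "\<dots> = transpose_mat Sji * Q * Sji + transpose_mat Sji * (transpose_mat K * R * K) * Sji"
      by (rule add_mult_distrib_mat[OF SQ SKRK Sic(1)])
    finally show ?thesis unfolding Qtij_def e2 by simp
  qed
  have svQ: "transpose_mat T *\<^sub>v svec Qtij = svec Qij"
    unfolding Qt_eq T_def by (rule svec_transform[OF Sc Sic(1) Qijc Sic(3)])
  have svQc: "svec Qtij \<in> carrier_vec (tri ?k)"
  proof -
    have "Qtij \<in> carrier_mat ?k ?k" unfolding Qt_eq by (rule mult_carrier_mat[OF mult_carrier_mat[OF Sit Qijc] Sic(1)])
    then have "vecm Qtij \<in> carrier_vec (?k * ?k)" by (rule vecm_carrier)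
    then show ?thesis using mult_mat_vec_carrier[OF Wmat_carrier] \<open>Qtij \<in> carrier_mat ?k ?k\<close> unfolding svec_def by auto
  qed
  have bt: "btil = bvec"
  proof -
    have "btil = - ((?X * ?Tt) *\<^sub>v svec Qtij)" unfolding btil_def reg_b_def IX by simp
    also have "(?X * ?Tt) *\<^sub>v svec Qtij = ?X *\<^sub>v (?Tt *\<^sub>v svec Qtij)" by (rule assoc_mult_mat_vec[OF Xc Ttc svQc])
    finally show ?thesis unfolding svQ bvec_def reg_b_def by simp
  qed
  have iff: "Areg *\<^sub>v svec P = bvec \<longleftrightarrow> Atil *\<^sub>v svec (transpose_mat Sji * P * Sji) = btil"
    if P: "pd_mat ?k P" for P
  proof -
    have Pc: "P \<in> carrier_mat ?k ?k" using P unfolding pd_mat_def sym_mat_def by blast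
    have PP: "transpose_mat Sji * P * Sji \<in> carrier_mat ?k ?k" by (rule mult_carrier_mat[OF mult_carrier_mat[OF Sit Pc] Sic(1)])
    have svc: "svec (transpose_mat Sji * P * Sji) \<in> carrier_vec (tri ?k)"
    proof -
      have "vecm (transpose_mat Sji * P * Sji) \<in> carrier_vec (?k * ?k)" by (rule vecm_carrier[OF PP])
      then show ?thesis using mult_mat_vec_carrier[OF Wmat_carrier] PP unfolding svec_def by auto
    qed
    have Ac: "Areg \<in> carrier_mat l (tri ?k)" unfolding Areg_eq
      by (intro minus_carrier_mat smult_carrier_mat add_carrier_mat Wc)
    have "Atil *\<^sub>v svec (transpose_mat Sji * P * Sji) = Areg *\<^sub>v (?Tt *\<^sub>v svec (transpose_mat Sji * P * Sji))"
      unfolding AT by (rule assoc_mult_mat_vec[OF Ac Ttc svc])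
    also have "?Tt *\<^sub>v svec (transpose_mat Sji * P * Sji) = svec P"
      unfolding T_def by (rule svec_transform[OF Sc Sic(1) Pc Sic(3)])
    finally show ?thesis using bt by simp
  qed
  show ?thesis using iff AT bt unfolding T_def Sj_def by blast
qed

end
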